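(* For $k\geq 3$ and $$n > \frac{2}{\ln(2)}k^{2}+\left(2-\frac{3}{\ln(2)}\right)k+\frac{1}{\ln(2)} \geq \frac{2^{\frac{1}{k-1}}(2k)-1}{2^{\frac{1}{k-1}}-1},$$ we have $t(K(n,k))=\frac{n}{k}-1$. Moreover, if $S$ is a vertex cut of $K(n,k)$ such that $\frac{|S|}{c(K(n,k)\setminus S)}=\frac{n}{k}-1$, then $S$ is the complement of a maximum independent set.
   Context: The Kneser graph $K(n,k)$ has as vertices the $k$-element subsets of $[n]=\{1,\dots,n\}$, two vertices being adjacent iff they are disjoint. A vertex cut is a set $S$ of vertices whose removal disconnects the graph; $c(G\setminus S)$ is the number of connected components after deleting $S$; the toughness is $t(G)=\min_S |S|/c(G\setminus S)$ over vertex cuts $S$. *)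

theory Defs
  imports Complex_Main
begin

definition kneser_vertices :: "nat \<Rightarrow> nat \<Rightarrow> nat set set" where
  "kneser_vertices n k = {A. A \<subseteq> {1..n} \<and> card A = k}"

definition kneser_adj :: "nat set \<Rightarrow> nat set \<Rightarrow> bool" where
  "kneser_adj A B \<longleftrightarrow> A \<inter> B = {}"

definition reach_in :: "'a set \<Rightarrow> ('a \<Rightarrow> 'a \<Rightarrow> bool) \<Rightarrow> 'a \<Rightarrow> 'a \<Rightarrow> bool" where
  "reach_in W E = (\<lambda>x y. x \<in> W \<and> y \<in> W \<and> E x y)\<^sup>*\<^sup>*"

definition components :: "'a set \<Rightarrow> ('a \<Rightarrow> 'a \<Rightarrow> bool) \<Rightarrow> 'a set set" where
  "components W E = (\<lambda>x. {y \<in> W. reach_in W E x y}) ` W"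

definition num_components :: "'a set \<Rightarrow> ('a \<Rightarrow> 'a \<Rightarrow> bool) \<Rightarrow> nat" where
  "num_components W E = card (components W E)"

definition vertex_cut :: "'a set \<Rightarrow> ('a \<Rightarrow> 'a \<Rightarrow> bool) \<Rightarrow> 'a set \<Rightarrow> bool" where
  "vertex_cut V E S \<longleftrightarrow> S \<subseteq> V \<and> num_components (V - S) E \<ge> 2"

definition toughness :: "'a set \<Rightarrow> ('a \<Rightarrow> 'a \<Rightarrow> bool) \<Rightarrow> real" where
  "toughness V E = Inf {real (card S) / real (num_components (V - S) E) | S. vertex_cut V E S}"

definition independent_set :: "'a set \<Rightarrow> ('a \<Rightarrow> 'a \<Rightarrow> bool) \<Rightarrow> 'a set \<Rightarrow> bool" where
  "independent_set V E I \<longleftrightarrow> I \<subseteq> V \<and> (\<forall>x\<in>I. \<forall>y\<in>I. \<not> E x y)"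

definition max_independent_set :: "'a set \<Rightarrow> ('a \<Rightarrow> 'a \<Rightarrow> bool) \<Rightarrow> 'a set \<Rightarrow> bool" where
  "max_independent_set V E I \<longleftrightarrow> independent_set V E I \<and>
     (\<forall>J. independent_set V E J \<longrightarrow> card J \<le> card I)"

end

theory Submission
  imports Defs "HOL-Combinatorics.Multiset_Permutations"
begin

definition intersecting :: "'a set set \<Rightarrow> bool" where
  "intersecting F \<longleftrightarrow> (\<forall>A\<in>F. \<forall>B\<in>F. A \<inter> B \<noteq> {})"

definition arc :: "nat \<Rightarrow> 'a list \<Rightarrow> nat \<Rightarrow> 'a set" where
  "arc k xs i = set (take k (rotate i xs))"

lemma arc_disj:
  assumes "distinct zs" "k \<le> d" "d + k \<le> length zs" "1 \<le> k"
  shows "arc k zs 0 \<inter> arc k zs d = {}"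
proof -
  have d: "d mod length zs = d" using assms by simp
  have "rotate d zs = drop d zs @ take d zs" using rotate_drop_take[of d zs] d by simp
  hence "take k (rotate d zs) = take k (drop d zs)" using assms by simp
  hence 1: "arc k zs d \<subseteq> set (drop d zs)" unfolding arc_def by (metis set_take_subset)
  have "take k zs = take k (take d zs)" using assms by (simp add: min_def)
  hence 2: "arc k zs 0 \<subseteq> set (take d zs)" unfolding arc_def by (metis rotate0 id_apply set_take_subset)
  show ?thesis using 1 2 set_take_disj_set_drop_if_distinct[OF assms(1), of d d] by blast
qed

lemma arc_rotate: "arc k (rotate a xs) b = arc k xs (b + a)"
  unfolding arc_def by (simp add: rotate_rotate)

lemma arc_mod: "arc k xs (i mod length xs) = arc k xs i"
  unfolding arc_def by (metis rotate_conv_mod)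

lemma arc_card_le_aux:
  assumes "distinct ys" "length ys = m" "2*k \<le> m" "1 \<le> k" "intersecting F" "arc k ys 0 \<in> F"
  shows "card {d\<in>{..<m}. arc k ys d \<in> F} \<le> k"
proof -
  let ?D = "{d\<in>{..<m}. arc k ys d \<in> F}"
  define \<psi> where "\<psi> d = (if d < k then d else d + k - m)" for d
  have low_high: "d < k \<or> m - k < d" if "d \<in> ?D" for d
  proof (rule ccontr)
    assume "\<not> (d < k \<or> m - k < d)"
    hence "k \<le> d" "d + k \<le> m" by auto
    hence "arc k ys 0 \<inter> arc k ys d = {}" using arc_disj assms by auto
    thus False using assms that unfolding intersecting_def by blast
  qed
  have im: "\<psi> ` ?D \<subseteq> {..<k}"
  proof
    fix x assume "x \<in> \<psi> ` ?D"
    then obtain d where d: "d \<in> ?D" "x = \<psi> d" by blast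
    show "x \<in> {..<k}" using low_high[OF d(1)] d unfolding \<psi>_def by auto
  qed
  have inj: "inj_on \<psi> ?D"
  proof
    fix d1 d2 assume d1: "d1 \<in> ?D" and d2: "d2 \<in> ?D" and eq: "\<psi> d1 = \<psi> d2"
    have disj: False if "a < k" "m - k < b" "a \<in> ?D" "b \<in> ?D" "b = a + (m - k)" for a b
    proof -
      let ?zs = "rotate a ys"
      have "arc k ?zs 0 \<inter> arc k ?zs (m - k) = {}"
        using arc_disj[of ?zs k "m-k"] assms by auto
      moreover have "arc k ?zs 0 = arc k ys a" "arc k ?zs (m-k) = arc k ys b"
        using arc_rotate[of k a ys] that by (auto simp: add.commute)
      ultimately show False using that assms unfolding intersecting_def by auto
    qed
    show "d1 = d2"
    proof (cases "d1 < k")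
      case True
      show ?thesis
      proof (cases "d2 < k")
        case True with \<open>d1 < k\<close> eq show ?thesis unfolding \<psi>_def by simp
      next
        case False
        hence "m - k < d2" using low_high d2 by auto
        moreover have "d2 < m" using d2 by auto
        ultimately have "d2 = d1 + (m - k)" using eq \<open>d1 < k\<close> False unfolding \<psi>_def by auto
        thus ?thesis using disj[of d1 d2] \<open>d1 < k\<close> \<open>m - k < d2\<close> d1 d2 by blast
      qed
    next
      case False
      hence h1: "m - k < d1" using low_high d1 by auto
      show ?thesis
      proof (cases "d2 < k")
        case True
        have "d1 < m" using d1 by auto
        hence "d1 = d2 + (m - k)" using eq True False h1 assms(3) unfolding \<psi>_def by auto
        thus ?thesis using disj[of d2 d1] True h1 d1 d2 by blast
      next
        case False
        with \<open>\<not> d1 < k\<close> eq d1 d2 low_high[OF d1] low_high[OF d2] show ?thesis unfolding \<psi>_def by auto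
      qed
    qed
  qed
  have "card ?D \<le> card {..<k}"
    using card_inj_on_le[OF inj im] by simp
  thus ?thesis by simp
qed

lemma arc_card_le:
  assumes "distinct xs" "length xs = m" "2*k \<le> m" "1 \<le> k" "intersecting F"
  shows "card {i\<in>{..<m}. arc k xs i \<in> F} \<le> k"
proof (cases "{i\<in>{..<m}. arc k xs i \<in> F} = {}")
  case True show ?thesis unfolding True by simp
next
  case False
  then obtain i0 where i0: "i0 < m" "arc k xs i0 \<in> F" by blast
  have "True" by simp
  let ?ys = "rotate i0 xs"
  have m0: "0 < m" using i0 by simp
  have "bij_betw (\<lambda>d. (d + i0) mod m) {d\<in>{..<m}. arc k ?ys d \<in> F} {i\<in>{..<m}. arc k xs i \<in> F}"
  proof (rule bij_betw_imageI)
    show "inj_on (\<lambda>d. (d + i0) mod m) {d \<in> {..<m}. arc k (rotate i0 xs) d \<in> F}"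
    proof
      fix a b assume a: "a \<in> {d \<in> {..<m}. arc k (rotate i0 xs) d \<in> F}" and b: "b \<in> {d \<in> {..<m}. arc k (rotate i0 xs) d \<in> F}"
        and eq: "(a + i0) mod m = (b + i0) mod m"
      have ea: "(a + i0 + (m - i0)) mod m = a" using a i0(1) by simp
      have eb: "(b + i0 + (m - i0)) mod m = b" using b i0(1) by simp
      have "((a + i0) mod m + (m - i0)) mod m = ((b + i0) mod m + (m - i0)) mod m" using eq by simp
      thus "a = b" using ea eb by (metis mod_add_left_eq)
    qed
    have key: "arc k (rotate i0 xs) d = arc k xs ((d + i0) mod m)" for d
      using arc_rotate[of k i0 xs d] arc_mod[of k xs "d + i0"] assms(2) by simp
    show "(\<lambda>d. (d + i0) mod m) ` {d \<in> {..<m}. arc k (rotate i0 xs) d \<in> F} = {i \<in> {..<m}. arc k xs i \<in> F}"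
    proof
      show "(\<lambda>d. (d + i0) mod m) ` {d \<in> {..<m}. arc k (rotate i0 xs) d \<in> F} \<subseteq> {i \<in> {..<m}. arc k xs i \<in> F}"
      proof
        fix x assume "x \<in> (\<lambda>d. (d + i0) mod m) ` {d \<in> {..<m}. arc k (rotate i0 xs) d \<in> F}"
        then obtain d where d: "d < m" "arc k (rotate i0 xs) d \<in> F" "x = (d + i0) mod m" by blast
        have "x < m" using d(3) m0 by simp
        moreover have "arc k xs x \<in> F" using d key by simp
        ultimately show "x \<in> {i \<in> {..<m}. arc k xs i \<in> F}" by simp
      qed
      show "{i \<in> {..<m}. arc k xs i \<in> F} \<subseteq> (\<lambda>d. (d + i0) mod m) ` {d \<in> {..<m}. arc k (rotate i0 xs) d \<in> F}"
      proof
        fix i assume i: "i \<in> {i \<in> {..<m}. arc k xs i \<in> F}"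
        define d where "d = (i + (m - i0)) mod m"
        have "(d + i0) mod m = (i + (m - i0) + i0) mod m" unfolding d_def by (rule mod_add_left_eq)
        also have "i + (m - i0) + i0 = i + m" using i0 by simp
        finally have di: "(d + i0) mod m = i" using i by simp
        have "d < m" unfolding d_def using m0 by simp
        moreover have "arc k (rotate i0 xs) d \<in> F" using i di key[of d] by simp
        ultimately have dD: "d \<in> {d \<in> {..<m}. arc k (rotate i0 xs) d \<in> F}" by simp
        show "i \<in> (\<lambda>d. (d + i0) mod m) ` {d \<in> {..<m}. arc k (rotate i0 xs) d \<in> F}"
        proof (rule image_eqI[where x=d])
          show "i = (d + i0) mod m" using di by simp
        qed (rule dD)
      qed
    qed
  qed
  hence "card {d\<in>{..<m}. arc k ?ys d \<in> F} = card {i\<in>{..<m}. arc k xs i \<in> F}"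
    by (rule bij_betw_same_card)
  hence "card {i\<in>{..<m}. arc k xs i \<in> F} = card {d\<in>{..<m}. arc k ?ys d \<in> F}" by simp
  also have "\<dots> \<le> k"
    apply (rule arc_card_le_aux[of ?ys m k F])
    using assms i0 by (auto simp: arc_rotate)
  finally show ?thesis .
qed


lemma inj_rotate_n: "inj (rotate i)"
  unfolding rotate_def by (simp add: inj_rotate1)

lemma rotate_perm_image:
  assumes "finite U"
  shows "rotate i ` permutations_of_set U = permutations_of_set U"
proof -
  let ?P = "permutations_of_set U"
  have sub: "rotate i ` ?P \<subseteq> ?P"
    by (auto simp: permutations_of_set_def)
  have "card (rotate i ` ?P) = card ?P"
    by (rule card_image[OF inj_on_subset[OF inj_rotate_n[of i] subset_UNIV]])
  thus ?thesis using sub card_subset_eq[OF finite_permutations_of_set sub] by simp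
qed

lemma count_rot:
  assumes "finite U"
  shows "card {xs \<in> permutations_of_set U. Q (rotate i xs)} = card {xs \<in> permutations_of_set U. Q xs}"
proof -
  let ?P = "permutations_of_set U"
  have "rotate i ` {xs \<in> ?P. Q (rotate i xs)} = {xs \<in> ?P. Q xs}"
  proof
    show "rotate i ` {xs \<in> ?P. Q (rotate i xs)} \<subseteq> {xs \<in> ?P. Q xs}"
      using rotate_perm_image[OF assms, of i] by blast
    show "{xs \<in> ?P. Q xs} \<subseteq> rotate i ` {xs \<in> ?P. Q (rotate i xs)}"
    proof
      fix ys assume ys: "ys \<in> {xs \<in> ?P. Q xs}"
      then obtain xs where xs: "xs \<in> ?P" "ys = rotate i xs"
        using rotate_perm_image[OF assms, of i] by (metis (no_types, lifting) imageE mem_Collect_eq)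
      show "ys \<in> rotate i ` {xs \<in> ?P. Q (rotate i xs)}"
        using xs ys by blast
    qed
  qed
  moreover have "inj_on (rotate i) {xs \<in> ?P. Q (rotate i xs)}"
    by (rule inj_on_subset[OF inj_rotate_n[of i] subset_UNIV])
  ultimately show ?thesis by (metis card_image)
qed

lemma fiber_card:
  assumes "finite U" "A \<subseteq> U" "card A = k"
  shows "card {xs \<in> permutations_of_set U. set (take k xs) = A} = fact k * fact (card U - k)"
proof -
  let ?f = "\<lambda>(ys, zs). ys @ zs"
  let ?L = "permutations_of_set A \<times> permutations_of_set (U - A)"
  let ?R = "{xs \<in> permutations_of_set U. set (take k xs) = A}"
  have fA: "finite A" using assms finite_subset by blast
  have bij: "bij_betw ?f ?L ?R"
  proof (rule bij_betw_imageI)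
    show "inj_on ?f ?L"
    proof
      fix p q assume p: "p \<in> ?L" and q: "q \<in> ?L" and eq: "?f p = ?f q"
      obtain ys zs where pq1: "p = (ys, zs)" by (cases p)
      obtain ys' zs' where pq2: "q = (ys', zs')" by (cases q)
      have "length ys = k" "length ys' = k"
        using p q pq1 pq2 assms(3) by (auto dest: length_finite_permutations_of_set)
      thus "p = q" using eq pq1 pq2 by auto
    qed
    show "?f ` ?L = ?R"
    proof
      show "?f ` ?L \<subseteq> ?R"
      proof
        fix xs assume "xs \<in> ?f ` ?L"
        then obtain ys zs where yz: "ys \<in> permutations_of_set A" "zs \<in> permutations_of_set (U - A)" "xs = ys @ zs"
          by auto
        have ly: "length ys = k" using yz(1) assms(3) by (auto dest: length_finite_permutations_of_set)
        have "set xs = U" using yz assms(2) by (auto simp: permutations_of_set_def)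
        moreover have "distinct xs" using yz by (auto simp: permutations_of_set_def)
        moreover have "take k xs = ys" using yz(3) ly by simp
        ultimately show "xs \<in> ?R" using yz(1) by (auto simp: permutations_of_set_def)
      qed
      show "?R \<subseteq> ?f ` ?L"
      proof
        fix xs assume xs: "xs \<in> ?R"
        hence d: "distinct xs" "set xs = U" by (auto simp: permutations_of_set_def)
        have t: "set (take k xs) = A" using xs by simp
        have "set (take k xs) \<inter> set (drop k xs) = {}"
          using set_take_disj_set_drop_if_distinct[OF d(1), of k k] by simp
        moreover have "set (take k xs) \<union> set (drop k xs) = U"
          using d(2) by (metis append_take_drop_id set_append)
        ultimately have sd: "set (drop k xs) = U - A" using t by blast
        have "take k xs \<in> permutations_of_set A" using t d by (auto simp: permutations_of_set_def)
        moreover have "drop k xs \<in> permutations_of_set (U - A)" using sd d by (auto simp: permutations_of_set_def)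
        ultimately have "(take k xs, drop k xs) \<in> ?L" by simp
        moreover have "xs = ?f (take k xs, drop k xs)" by simp
        ultimately show "xs \<in> ?f ` ?L" by (rule rev_image_eqI)
      qed
    qed
  qed
  have "card ?R = card ?L" using bij_betw_same_card[OF bij] by simp
  also have "\<dots> = fact (card A) * fact (card (U - A))"
    using fA assms(1) by (simp add: card_cartesian_product)
  also have "card (U - A) = card U - k" using assms fA by (simp add: card_Diff_subset)
  finally show ?thesis using assms(3) by simp
qed

lemma card_indicator_swap:
  fixes P :: "'b set" and Q :: "'b \<Rightarrow> nat \<Rightarrow> bool"
  assumes "finite P"
  shows "(\<Sum>xs\<in>P. card {i\<in>{..<m}. Q xs i}) = (\<Sum>i<m. card {xs\<in>P. Q xs i})"
proof -
  have "(\<Sum>xs\<in>P. card {i\<in>{..<m}. Q xs i}) = (\<Sum>xs\<in>P. \<Sum>i<m. if Q xs i then 1 else 0)"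
    by (simp add: sum.If_cases Int_def)
  also have "\<dots> = (\<Sum>i<m. \<Sum>xs\<in>P. if Q xs i then 1 else 0)" by (rule sum.swap)
  also have "\<dots> = (\<Sum>i<m. card {xs\<in>P. Q xs i})"
    using assms by (simp add: sum.If_cases Int_def)
  finally show ?thesis .
qed

theorem EKR:
  assumes fin: "finite U" and FU: "F \<subseteq> {A. A \<subseteq> U \<and> card A = k}" and inter: "intersecting F"
    and k1: "1 \<le> k" and km: "2*k \<le> card U"
  shows "card F \<le> (card U - 1) choose (k - 1)"
proof -
  define m where "m = card U"
  let ?P = "permutations_of_set U"
  have fF: "finite F"
  proof -
    have "F \<subseteq> Pow U" using FU by auto
    thus ?thesis using fin finite_subset by blast
  qed
  have "(\<Sum>xs\<in>?P. card {i\<in>{..<m}. arc k xs i \<in> F}) \<le> (\<Sum>xs\<in>?P. k)"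
  proof (rule sum_mono)
    fix xs assume "xs \<in> ?P"
    hence "distinct xs" "length xs = m" unfolding m_def
      by (auto simp: permutations_of_set_def distinct_card)
    thus "card {i\<in>{..<m}. arc k xs i \<in> F} \<le> k"
      using arc_card_le[of xs m k F] km k1 inter unfolding m_def by simp
  qed
  also have "\<dots> = fact m * k" using fin unfolding m_def by simp
  finally have up: "(\<Sum>xs\<in>?P. card {i\<in>{..<m}. arc k xs i \<in> F}) \<le> fact m * k" .
  have base: "card {xs \<in> ?P. set (take k xs) \<in> F} = card F * (fact k * fact (m - k))"
  proof -
    have eq: "{xs \<in> ?P. set (take k xs) \<in> F} = (\<Union>A\<in>F. {xs \<in> ?P. set (take k xs) = A})" by auto
    have "card (\<Union>A\<in>F. {xs \<in> ?P. set (take k xs) = A}) = (\<Sum>A\<in>F. card {xs \<in> ?P. set (take k xs) = A})"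
      by (rule card_UN_disjoint) (auto simp: fF)
    also have "\<dots> = (\<Sum>A\<in>F. fact k * fact (m - k))"
    proof (rule sum.cong)
      fix A assume "A \<in> F"
      thus "card {xs \<in> ?P. set (take k xs) = A} = fact k * fact (m - k)"
        using fiber_card[OF fin, of A k] FU unfolding m_def by auto
    qed simp
    finally show ?thesis using eq by simp
  qed
  have "(\<Sum>xs\<in>?P. card {i\<in>{..<m}. arc k xs i \<in> F}) = (\<Sum>i<m. card {xs\<in>?P. arc k xs i \<in> F})"
    by (rule card_indicator_swap) simp
  also have "\<dots> = (\<Sum>i<m. card F * (fact k * fact (m - k)))"
  proof (rule sum.cong)
    fix i
    have "card {xs\<in>?P. arc k xs i \<in> F} = card {xs\<in>?P. set (take k (rotate i xs)) \<in> F}"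
      unfolding arc_def by simp
    also have "\<dots> = card {xs\<in>?P. set (take k xs) \<in> F}"
      by (rule count_rot[OF fin, where Q = "\<lambda>ys. set (take k ys) \<in> F"])
    finally show "card {xs\<in>?P. arc k xs i \<in> F} = card F * (fact k * fact (m - k))" using base by simp
  qed simp
  also have "\<dots> = m * (card F * (fact k * fact (m - k)))" by simp
  finally have ineq: "m * (card F * (fact k * fact (m - k))) \<le> fact m * k" using up by simp
  have mpos: "0 < m" using km k1 unfolding m_def by simp
  have fm: "fact m = m * fact (m - 1)" using mpos by (cases m) auto
  have fk: "fact k = k * fact (k - 1)" using k1 by (cases k) auto
  have fl: "fact (k - 1) * fact (m - k) * ((m - 1) choose (k - 1)) = fact (m - 1)"
    using binomial_fact_lemma[of "k - 1" "m - 1"] km k1 unfolding m_def by simp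
  define X where "X = m * k * fact (k - 1) * fact (m - k)"
  have e1: "m * (card F * (fact k * fact (m - k))) = X * card F"
    unfolding X_def fk by (simp add: ac_simps)
  have e2: "fact m * k = X * ((m - 1) choose (k - 1))"
    unfolding X_def fm fl[symmetric] by (simp add: ac_simps)
  have "X * card F \<le> X * ((m - 1) choose (k - 1))" using ineq e1 e2 by simp
  moreover have "0 < X" unfolding X_def using mpos k1 by simp
  ultimately have "card F \<le> (m - 1) choose (k - 1)" by simp
  thus ?thesis unfolding m_def .
qed


lemma finite_kv: "finite (kneser_vertices n k)"
  unfolding kneser_vertices_def by (rule finite_subset[of _ "Pow {1..n}"]) auto

lemma kv_finite_mem: "A \<in> kneser_vertices n k \<Longrightarrow> finite A \<and> A \<subseteq> {1..n} \<and> card A = k"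
  unfolding kneser_vertices_def using finite_subset by auto

lemma card_avoid:
  assumes "M \<subseteq> {1..n}"
  shows "card {Z \<in> kneser_vertices n k. Z \<inter> M = {}} = (n - card M) choose k"
proof -
  have "{Z \<in> kneser_vertices n k. Z \<inter> M = {}} = {Z. Z \<subseteq> {1..n} - M \<and> card Z = k}"
    unfolding kneser_vertices_def by auto
  moreover have "card ({1..n} - M) = n - card M"
    using assms by (simp add: card_Diff_subset finite_subset)
  ultimately show ?thesis by (simp add: n_subsets)
qed

lemma card_kv: "card (kneser_vertices n k) = n choose k"
  using card_avoid[of "{}" n k] by simp

lemma card_contain_avoid:
  assumes "M \<subseteq> {1..n}" "y \<in> {1..n}" "y \<notin> M" "1 \<le> k"
  shows "card {Z \<in> kneser_vertices n k. y \<in> Z \<and> Z \<inter> M = {}} = (n - card M - 1) choose (k - 1)"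
proof -
  let ?T = "{Z'. Z' \<subseteq> {1..n} - M - {y} \<and> card Z' = k - 1}"
  have fM: "finite M" using assms finite_subset by blast
  have im: "insert y ` ?T = {Z \<in> kneser_vertices n k. y \<in> Z \<and> Z \<inter> M = {}}"
  proof
    show "insert y ` ?T \<subseteq> {Z \<in> kneser_vertices n k. y \<in> Z \<and> Z \<inter> M = {}}"
    proof
      fix Z assume "Z \<in> insert y ` ?T"
      then obtain Z' where Z': "Z' \<subseteq> {1..n} - M - {y}" "card Z' = k - 1" "Z = insert y Z'" by auto
      have fZ': "finite Z'" using Z'(1) finite_subset by blast
      have "y \<notin> Z'" using Z'(1) by auto
      hence "card Z = k" using Z' fZ' assms(4) by simp
      thus "Z \<in> {Z \<in> kneser_vertices n k. y \<in> Z \<and> Z \<inter> M = {}}"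
        using Z' assms unfolding kneser_vertices_def by auto
    qed
    show "{Z \<in> kneser_vertices n k. y \<in> Z \<and> Z \<inter> M = {}} \<subseteq> insert y ` ?T"
    proof
      fix Z assume Z: "Z \<in> {Z \<in> kneser_vertices n k. y \<in> Z \<and> Z \<inter> M = {}}"
      have fZ: "finite Z" using Z kv_finite_mem by blast
      have "Z - {y} \<in> ?T" using Z fZ unfolding kneser_vertices_def by auto
      moreover have "Z = insert y (Z - {y})" using Z by auto
      ultimately show "Z \<in> insert y ` ?T" by blast
    qed
  qed
  have inj: "inj_on (insert y) ?T"
  proof (rule inj_onI)
    fix A B assume A: "A \<in> ?T" and B: "B \<in> ?T" and eq: "insert y A = insert y B"
    have "y \<notin> A" "y \<notin> B" using A B by auto
    thus "A = B" using eq insert_ident by metis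
  qed
  have c1: "card {Z \<in> kneser_vertices n k. y \<in> Z \<and> Z \<inter> M = {}} = card ?T"
    using card_image[OF inj] im by simp
  have "card ({1..n} - M - {y}) = n - card M - 1"
    using assms fM by (simp add: card_Diff_subset)
  hence "card ?T = (n - card M - 1) choose (k - 1)" by (simp add: n_subsets)
  thus ?thesis using c1 by simp
qed

lemma card_star:
  assumes "y \<in> {1..n}" "1 \<le> k"
  shows "card {Z \<in> kneser_vertices n k. y \<in> Z} = (n - 1) choose (k - 1)"
  using card_contain_avoid[of "{}" n y k] assms by simp


definition comp_of :: "'a set \<Rightarrow> ('a \<Rightarrow> 'a \<Rightarrow> bool) \<Rightarrow> 'a \<Rightarrow> 'a set" where
  "comp_of W E x = {y \<in> W. reach_in W E x y}"

lemma components_alt: "components W E = comp_of W E ` W"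
  unfolding components_def comp_of_def by simp

lemma reach_in_refl: "reach_in W E x x"
  unfolding reach_in_def by simp

lemma reach_in_trans: "reach_in W E x y \<Longrightarrow> reach_in W E y z \<Longrightarrow> reach_in W E x z"
  unfolding reach_in_def by (rule rtranclp_trans)

lemma reach_in_step: "x \<in> W \<Longrightarrow> y \<in> W \<Longrightarrow> E x y \<Longrightarrow> reach_in W E x y"
  unfolding reach_in_def by (rule r_into_rtranclp) simp

lemma reach_in_sym:
  assumes sym: "\<And>x y. E x y \<Longrightarrow> E y x" and r: "reach_in W E x y"
  shows "reach_in W E y x"
  using r unfolding reach_in_def
proof (induction rule: rtranclp_induct)
  case base thus ?case by simp
next
  case (step y z)
  have "(\<lambda>x y. x \<in> W \<and> y \<in> W \<and> E x y) z y" using step(2) sym by simp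
  thus ?case using step(3) by (rule converse_rtranclp_into_rtranclp)
qed

lemma reach_in_first:
  assumes "reach_in W E x y" "x \<noteq> y"
  shows "\<exists>z. x \<in> W \<and> z \<in> W \<and> E x z \<and> reach_in W E z y"
  using assms unfolding reach_in_def
  by (induction rule: converse_rtranclp_induct) auto

lemma comp_of_mem: "x \<in> W \<Longrightarrow> x \<in> comp_of W E x"
  unfolding comp_of_def by (simp add: reach_in_refl)

lemma comp_of_sub: "comp_of W E x \<subseteq> W"
  unfolding comp_of_def by auto

lemma comp_of_eq:
  assumes sym: "\<And>x y. E x y \<Longrightarrow> E y x" and y: "y \<in> comp_of W E x"
  shows "comp_of W E y = comp_of W E x"
proof -
  have r: "reach_in W E x y" using y unfolding comp_of_def by auto
  have r': "reach_in W E y x" using reach_in_sym[OF sym r] .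
  show ?thesis
  proof
    show "comp_of W E y \<subseteq> comp_of W E x"
    proof
      fix z assume "z \<in> comp_of W E y"
      hence "z \<in> W" "reach_in W E y z" unfolding comp_of_def by auto
      thus "z \<in> comp_of W E x" using reach_in_trans[OF r] unfolding comp_of_def by blast
    qed
    show "comp_of W E x \<subseteq> comp_of W E y"
    proof
      fix z assume "z \<in> comp_of W E x"
      hence "z \<in> W" "reach_in W E x z" unfolding comp_of_def by auto
      thus "z \<in> comp_of W E y" using reach_in_trans[OF r'] unfolding comp_of_def by blast
    qed
  qed
qed

lemma components_sub: "C \<in> components W E \<Longrightarrow> C \<subseteq> W"
  unfolding components_alt using comp_of_sub[of W E] by blast

lemma components_nonempty: "C \<in> components W E \<Longrightarrow> C \<noteq> {}"
  unfolding components_alt using comp_of_mem[of _ W E] by blast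

lemma components_of_mem:
  assumes sym: "\<And>x y. E x y \<Longrightarrow> E y x" and C: "C \<in> components W E" and x: "x \<in> C"
  shows "C = comp_of W E x"
proof -
  obtain w where w: "w \<in> W" "C = comp_of W E w" using C unfolding components_alt by auto
  show ?thesis using comp_of_eq[OF sym, where y=x and W=W and x=w] x w by simp
qed

lemma components_disjoint:
  assumes sym: "\<And>x y. E x y \<Longrightarrow> E y x"
    and C1: "C1 \<in> components W E" and C2: "C2 \<in> components W E" and ne: "C1 \<noteq> C2"
  shows "C1 \<inter> C2 = {}"
proof (rule ccontr)
  assume "C1 \<inter> C2 \<noteq> {}"
  then obtain x where "x \<in> C1" "x \<in> C2" by auto
  thus False using components_of_mem[OF sym C1] components_of_mem[OF sym C2] ne by metis
qed

lemma components_closed: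
  assumes sym: "\<And>x y. E x y \<Longrightarrow> E y x"
    and C: "C \<in> components W E" and X: "X \<in> C" and Y: "Y \<in> W" and e: "E X Y"
  shows "Y \<in> C"
proof -
  have XW: "X \<in> W" using C X components_sub by blast
  have "C = comp_of W E X" using components_of_mem[OF sym C X] .
  moreover have "reach_in W E X Y" using reach_in_step[where E=E, OF XW Y e] .
  ultimately show ?thesis using Y unfolding comp_of_def by simp
qed

lemma components_nonadj:
  assumes sym: "\<And>x y. E x y \<Longrightarrow> E y x"
    and C1: "C1 \<in> components W E" and C2: "C2 \<in> components W E" and ne: "C1 \<noteq> C2"
    and X: "X \<in> C1" and Y: "Y \<in> C2"
  shows "\<not> E X Y"
proof
  assume e: "E X Y"
  have "Y \<in> W" using C2 Y components_sub by blast
  hence "Y \<in> C1" using components_closed[where E=E, OF sym C1 X _ e] by simp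
  thus False using components_disjoint[OF sym C1 C2 ne] Y by blast
qed

lemma components_edge:
  assumes sym: "\<And>x y. E x y \<Longrightarrow> E y x"
    and C: "C \<in> components W E" and X: "X \<in> C" and Y: "Y \<in> C" and ne: "X \<noteq> Y"
  shows "\<exists>A\<in>C. \<exists>B\<in>C. E A B"
proof -
  have "C = comp_of W E X" using components_of_mem[OF sym C X] .
  hence "reach_in W E X Y" using Y unfolding comp_of_def by auto
  then obtain z where z: "X \<in> W" "z \<in> W" "E X z" using reach_in_first[OF _ ne] by blast
  have "z \<in> C" using components_closed[where E=E, OF sym C X z(2) z(3)] .
  thus ?thesis using X z(3) by blast
qed

lemma components_indep:
  assumes ind: "\<forall>X\<in>W. \<forall>Y\<in>W. \<not> E X Y"
  shows "components W E = (\<lambda>x. {x}) ` W"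
proof -
  have "comp_of W E x = {x}" if "x \<in> W" for x
  proof
    show "{x} \<subseteq> comp_of W E x" using comp_of_mem[OF that] by simp
    show "comp_of W E x \<subseteq> {x}"
    proof
      fix y assume y: "y \<in> comp_of W E x"
      hence r: "reach_in W E x y" unfolding comp_of_def by simp
      show "y \<in> {x}"
      proof (rule ccontr)
        assume "y \<notin> {x}"
        then obtain z where "x \<in> W" "z \<in> W" "E x z" using reach_in_first[OF r] by auto
        thus False using ind by blast
      qed
    qed
  qed
  thus ?thesis unfolding components_alt by (auto simp: image_def)
qed

lemma card_components_indep:
  assumes ind: "\<forall>X\<in>W. \<forall>Y\<in>W. \<not> E X Y"
  shows "card (components W E) = card W"
  unfolding components_indep[OF ind] by (rule card_image) (simp add: inj_on_def)

lemma finite_components: "finite W \<Longrightarrow> finite (components W E)"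
  unfolding components_def by simp

lemma Union_components: "\<Union>(components W E) = W"
  unfolding components_alt using comp_of_mem[of _ W E] comp_of_sub[of W E] by blast


lemma real_choose_prod:
  "real (m choose k) = (\<Prod>i = 0..<k. (real m - real i) / real (k - i))"
  by (simp add: binomial_gbinomial gbinomial_altdef_of_nat)

lemma u_bound:
  fixes n k :: nat
  assumes k3: "k \<ge> 3" and h: "(real n - 2 * real k) * ln 2 > (2 * real k - 1) * (real k - 1)"
    and D: "real n - 2 * real k > 0"
  shows "real k * real k / (real n - 2 * real k + 1) < ln 2"
proof -
  define d where "d = real n - 2 * real k"
  have dpos: "d > 0" using D unfolding d_def .
  have kk: "real k * real k - 3 * real k + 1 \<ge> 0"
  proof -
    have "real k \<ge> 3" using k3 by simp
    hence "real k * (real k - 3) \<ge> 0" by simp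
    thus ?thesis by (simp add: algebra_simps)
  qed
  have "real k * real k * d \<le> (2 * real k - 1) * (real k - 1) * (d + 1)"
  proof -
    have "(2 * real k - 1) * (real k - 1) * (d + 1) - real k * real k * d
        = (real k * real k - 3 * real k + 1) * d + (2 * real k - 1) * (real k - 1)"
      by (simp add: algebra_simps)
    moreover have "(real k * real k - 3 * real k + 1) * d \<ge> 0" using kk dpos by simp
    moreover have "(2 * real k - 1) * (real k - 1) \<ge> 0" using k3 by simp
    ultimately show ?thesis by linarith
  qed
  hence "real k * real k / (d + 1) \<le> (2 * real k - 1) * (real k - 1) / d"
    using dpos by (simp add: field_simps)
  also have "\<dots> < ln 2" using h dpos unfolding d_def by (simp add: field_simps)
  finally show ?thesis unfolding d_def .
qed

lemma delta_half:
  fixes n k :: nat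
  assumes k3: "k \<ge> 3" and h: "(real n - 2 * real k) * ln 2 > (2 * real k - 1) * (real k - 1)"
    and D: "real n - 2 * real k > 0"
  shows "2 * ((n - k) choose k) > n choose k"
proof -
  define u where "u = real k / (real n - 2 * real k + 1)"
  have kn: "k \<le> n" using D by simp
  have upos: "u \<ge> 0" unfolding u_def using D by simp
  have termb: "exp (- u) * (real n - real i) \<le> real (n - k) - real i" if i: "i < k" for i
  proof -
    define a where "a = real n - real k - real i"
    have a1: "a \<ge> real n - 2 * real k + 1" unfolding a_def using i by simp
    have apos: "a > 0" using a1 D by simp
    have "exp (real k / a) \<ge> 1 + real k / a" by (rule exp_ge_add_one_self)
    hence "a * exp (real k / a) \<ge> a * (1 + real k / a)" using apos by simp
    also have "a * (1 + real k / a) = real n - real i" using apos unfolding a_def by (simp add: field_simps)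
    finally have 1: "real n - real i \<le> a * exp (real k / a)" .
    have "real k / a \<le> u" unfolding u_def
      using a1 D by (simp add: divide_left_mono)
    hence "exp (- u) \<le> exp (- (real k / a))" by simp
    hence "exp (- u) * (real n - real i) \<le> exp (- (real k / a)) * (real n - real i)"
      using i kn by (intro mult_right_mono) auto
    also have "\<dots> \<le> exp (- (real k / a)) * (a * exp (real k / a))"
      using 1 by (intro mult_left_mono) auto
    also have "\<dots> = a" by (simp add: exp_minus field_simps)
    finally show ?thesis unfolding a_def using kn by (simp add: of_nat_diff)
  qed
  have "(\<Prod>i = 0..<k. exp (- u) * ((real n - real i) / real (k - i)))
        \<le> (\<Prod>i = 0..<k. (real (n - k) - real i) / real (k - i))"
  proof (rule prod_mono)
    fix i assume "i \<in> {0..<k}"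
    hence i: "i < k" by simp
    have kpos: "real (k - i) > 0" using i by simp
    have "0 \<le> exp (- u) * ((real n - real i) / real (k - i))"
      using i kn kpos by (intro mult_nonneg_nonneg divide_nonneg_pos) auto
    moreover have "exp (- u) * ((real n - real i) / real (k - i)) \<le> (real (n - k) - real i) / real (k - i)"
      using termb[OF i] kpos by (simp add: divide_right_mono mult.assoc[symmetric] times_divide_eq_right)
    ultimately show "0 \<le> exp (- u) * ((real n - real i) / real (k - i)) \<and>
        exp (- u) * ((real n - real i) / real (k - i)) \<le> (real (n - k) - real i) / real (k - i)" by simp
  qed
  moreover have "(\<Prod>i = 0..<k. exp (- u) * ((real n - real i) / real (k - i)))
      = exp (- u) ^ k * (\<Prod>i = 0..<k. (real n - real i) / real (k - i))"
    by (subst prod.distrib) simp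
  ultimately have A: "exp (- u) ^ k * real (n choose k) \<le> real ((n - k) choose k)"
    unfolding real_choose_prod by simp
  have B: "exp (- u) ^ k = exp (- (real k * u))"
    by (simp add: exp_of_nat_mult[symmetric])
  have "real k * u < ln 2"
    using u_bound[OF k3 h D] unfolding u_def by (simp add: field_simps)
  hence "exp (- (real k * u)) > exp (- ln 2)" by simp
  hence E: "exp (- (real k * u)) > 1 / 2" by (simp add: exp_minus)
  have F: "real (n choose k) > 0" using kn by simp
  have "(1/2) * real (n choose k) < exp (- (real k * u)) * real (n choose k)"
    by (rule mult_strict_right_mono[OF E F])
  hence "real ((n - k) choose k) > real (n choose k) / 2" using A B by simp
  thus ?thesis by linarith
qed

lemma b_le:
  fixes n k :: nat
  assumes "3 * k \<le> n"
  shows "real ((n - 2 * k) choose k) * real (n choose k) \<le> real ((n - k) choose k) ^ 2"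
proof -
  have "(\<Prod>i = 0..<k. ((real (n - 2*k) - real i) / real (k - i)) * ((real n - real i) / real (k - i)))
     \<le> (\<Prod>i = 0..<k. ((real (n - k) - real i) / real (k - i)) ^ 2)"
  proof (rule prod_mono)
    fix i assume "i \<in> {0..<k}"
    hence i: "i < k" by simp
    have kpos: "real (k - i) > 0" using i by simp
    have e1: "real (n - 2*k) = real n - 2 * real k" "real (n - k) = real n - real k"
      using assms by (simp_all add: of_nat_diff)
    have nn: "real n - 2 * real k - real i \<ge> 0" using assms i by simp
    have "(real n - 2 * real k - real i) * (real n - real i) \<le> (real n - real k - real i) ^ 2"
    proof -
      have "(real n - real k - real i) ^ 2 - (real n - 2 * real k - real i) * (real n - real i) = real k ^ 2"
        by (simp add: power2_eq_square algebra_simps)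
      thus ?thesis by (smt (verit) zero_le_power2)
    qed
    hence "((real n - 2 * real k - real i) / real (k - i)) * ((real n - real i) / real (k - i))
        \<le> ((real n - real k - real i) / real (k - i)) ^ 2"
      using kpos by (simp add: power2_eq_square divide_right_mono)
    moreover have "0 \<le> ((real n - 2 * real k - real i) / real (k - i)) * ((real n - real i) / real (k - i))"
      using nn kpos i by (intro mult_nonneg_nonneg divide_nonneg_pos) auto
    ultimately show "0 \<le> ((real (n - 2*k) - real i) / real (k - i)) * ((real n - real i) / real (k - i)) \<and>
       ((real (n - 2*k) - real i) / real (k - i)) * ((real n - real i) / real (k - i)) \<le> ((real (n - k) - real i) / real (k - i)) ^ 2"
      using e1 by simp
  qed
  hence "(\<Prod>i = 0..<k. (real (n - 2*k) - real i) / real (k - i)) * (\<Prod>i = 0..<k. (real n - real i) / real (k - i))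
     \<le> (\<Prod>i = 0..<k. (real (n - k) - real i) / real (k - i)) ^ 2"
    by (simp only: prod.distrib prod_power_distrib[symmetric])
  thus ?thesis by (simp only: real_choose_prod)
qed


definition meets :: "nat \<Rightarrow> nat \<Rightarrow> nat set \<Rightarrow> nat set set" where
  "meets n k X = {Z \<in> kneser_vertices n k. Z \<inter> X \<noteq> {}}"

definition avoid :: "nat \<Rightarrow> nat \<Rightarrow> nat set \<Rightarrow> nat set set" where
  "avoid n k X = {Z \<in> kneser_vertices n k. Z \<inter> X = {}}"

lemma choose_mono_top: "a \<le> b \<Longrightarrow> a choose k \<le> b choose k"
proof -
  assume ab: "a \<le> b"
  have "card {B. B \<subseteq> {..<a} \<and> card B = k} \<le> card {B. B \<subseteq> {..<b} \<and> card B = k}"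
  proof (rule card_mono)
    show "finite {B. B \<subseteq> {..<b} \<and> card B = k}" by simp
    show "{B. B \<subseteq> {..<a} \<and> card B = k} \<subseteq> {B. B \<subseteq> {..<b} \<and> card B = k}"
      using ab by auto
  qed
  thus ?thesis by (simp add: n_subsets)
qed

lemma meets_avoid: "meets n k X = kneser_vertices n k - avoid n k X"
  unfolding meets_def avoid_def by auto

lemma avoid_Un: "avoid n k (X \<union> Y) = avoid n k X \<inter> avoid n k Y"
  unfolding avoid_def by auto

lemma card_avoid': "M \<subseteq> {1..n} \<Longrightarrow> card (avoid n k M) = (n - card M) choose k"
  unfolding avoid_def by (rule card_avoid)

lemma card_meets:
  assumes "X \<in> kneser_vertices n k"
  shows "card (meets n k X) + ((n - k) choose k) = n choose k"
proof -
  have XU: "X \<subseteq> {1..n}" "card X = k" using assms kv_finite_mem by blast+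
  have "avoid n k X \<subseteq> kneser_vertices n k" unfolding avoid_def by auto
  hence "card (meets n k X) = card (kneser_vertices n k) - card (avoid n k X)"
    unfolding meets_avoid by (simp add: card_Diff_subset finite_kv finite_subset)
  moreover have "card (avoid n k X) \<le> card (kneser_vertices n k)"
    using \<open>avoid n k X \<subseteq> _\<close> by (simp add: card_mono finite_kv)
  ultimately show ?thesis using card_avoid'[OF XU(1)] XU(2) card_kv by simp
qed

lemma card_meets2:
  assumes "X \<in> kneser_vertices n k" "Y \<in> kneser_vertices n k"
  shows "card (meets n k X \<inter> meets n k Y) + 2 * ((n - k) choose k) = (n choose k) + ((n - card (X \<union> Y)) choose k)"
proof -
  have XU: "X \<subseteq> {1..n}" "card X = k" "Y \<subseteq> {1..n}" "card Y = k" using assms kv_finite_mem by blast+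
  let ?V = "kneser_vertices n k"
  have s1: "avoid n k X \<subseteq> ?V" "avoid n k Y \<subseteq> ?V" unfolding avoid_def by auto
  have fin: "finite (avoid n k X)" "finite (avoid n k Y)" using s1 finite_kv finite_subset by blast+
  have "meets n k X \<inter> meets n k Y = ?V - (avoid n k X \<union> avoid n k Y)"
    unfolding meets_avoid by auto
  hence c1: "card (meets n k X \<inter> meets n k Y) = card ?V - card (avoid n k X \<union> avoid n k Y)"
    using s1 by (simp add: card_Diff_subset finite_kv fin)
  have c2: "card (avoid n k X \<union> avoid n k Y) + card (avoid n k X \<inter> avoid n k Y) = card (avoid n k X) + card (avoid n k Y)"
    using card_Un_Int[OF fin] by simp
  have c3: "card (avoid n k X \<inter> avoid n k Y) = (n - card (X \<union> Y)) choose k"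
    using card_avoid'[of "X \<union> Y" n k] XU avoid_Un by simp
  have c4: "card (avoid n k X) = (n - k) choose k" "card (avoid n k Y) = (n - k) choose k"
    using card_avoid' XU by auto
  have c5: "card (avoid n k X \<union> avoid n k Y) \<le> card ?V"
    using s1 by (intro card_mono finite_kv) auto
  have c6: "card ?V = n choose k" by (rule card_kv)
  have c7: "card (meets n k X \<inter> meets n k Y) + card (avoid n k X \<union> avoid n k Y) = n choose k"
    using c1 c5 c6 by simp
  define A where "A = card (meets n k X \<inter> meets n k Y)"
  define U where "U = card (avoid n k X \<union> avoid n k Y)"
  define I where "I = card (avoid n k X \<inter> avoid n k Y)"
  define d where "d = (n - k) choose k"
  define bb where "bb = (n - card (X \<union> Y)) choose k"
  have "A + U = n choose k" "U + I = d + d" "I = bb" using c7 c2 c3 c4 unfolding A_def U_def I_def d_def bb_def by simp_all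
  hence "A + 2 * d = (n choose k) + bb" by linarith
  thus ?thesis unfolding A_def d_def bb_def .
qed


lemma kv_nonempty: "1 \<le> k \<Longrightarrow> X \<in> kneser_vertices n k \<Longrightarrow> X \<noteq> {}"
  using kv_finite_mem[of X n k] by auto

lemma card_disj_union_le:
  assumes "C \<inter> W0 = {}" "C \<union> W0 \<subseteq> T" "finite T"
  shows "card C + card W0 \<le> card T"
proof -
  have "finite C" "finite W0" using assms finite_subset by blast+
  hence "card (C \<union> W0) = card C + card W0" using assms(1) by (simp add: card_Un_disjoint)
  moreover have "card (C \<union> W0) \<le> card T" using assms by (simp add: card_mono)
  ultimately show ?thesis by simp
qed

lemma finite_meets: "finite (meets n k X)"
  unfolding meets_def using finite_kv by simp

lemma cross_bound_int:
  assumes k1: "1 \<le> k" and CV: "C \<subseteq> kneser_vertices n k" and WV: "W0 \<subseteq> kneser_vertices n k"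
    and disj: "C \<inter> W0 = {}" and X0: "X0 \<in> C"
    and cr: "\<forall>X\<in>C. \<forall>Y\<in>W0. X \<inter> Y \<noteq> {}" and ic: "intersecting C"
  shows "card C + card W0 + ((n - k) choose k) \<le> (n choose k)"
proof -
  have "C \<union> W0 \<subseteq> meets n k X0"
    using CV WV X0 cr ic unfolding meets_def intersecting_def by (auto simp: Int_commute)
  hence "card C + card W0 \<le> card (meets n k X0)"
    using card_disj_union_le[OF disj _ finite_meets] by blast
  thus ?thesis using card_meets[of X0 n k] X0 CV by auto
qed

lemma cross_bound:
  fixes n k :: nat
  assumes k1: "1 \<le> k" and n3: "3*k \<le> n"
    and CV: "C \<subseteq> kneser_vertices n k" and WV: "W0 \<subseteq> kneser_vertices n k"
    and disj: "C \<inter> W0 = {}" and Cne: "C \<noteq> {}" and Wne: "W0 \<noteq> {}"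
    and cr: "\<forall>X\<in>C. \<forall>Y\<in>W0. X \<inter> Y \<noteq> {}"
    and num: "(n choose k) + 2 * ((n - 2*k) choose k) < 3 * ((n - k) choose k)"
  shows "card C + card W0 + ((n - k) choose k) \<le> (n choose k)"
    and "\<not> intersecting C \<Longrightarrow> \<not> intersecting W0 \<Longrightarrow> card C + card W0 + ((n - k) choose k) < (n choose k)"
proof -
  have cr': "\<forall>Y\<in>W0. \<forall>X\<in>C. Y \<inter> X \<noteq> {}" using cr by (auto simp: Int_commute)
  have both: "card C + card W0 + ((n - k) choose k) < (n choose k)"
    if nc: "\<not> intersecting C" and nw: "\<not> intersecting W0"
  proof -
    obtain X X' where XX: "X \<in> C" "X' \<in> C" "X \<inter> X' = {}" using nc unfolding intersecting_def by auto
    obtain Y Y' where YY: "Y \<in> W0" "Y' \<in> W0" "Y \<inter> Y' = {}" using nw unfolding intersecting_def by auto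
    have XV: "X \<in> kneser_vertices n k" "X' \<in> kneser_vertices n k" using XX CV by auto
    have YV: "Y \<in> kneser_vertices n k" "Y' \<in> kneser_vertices n k" using YY WV by auto
    have cXX: "card (X \<union> X') = 2 * k"
      using XV XX(3) kv_finite_mem by (simp add: card_Un_disjoint)
    have cYY: "card (Y \<union> Y') = 2 * k"
      using YV YY(3) kv_finite_mem by (simp add: card_Un_disjoint)
    have "C \<subseteq> meets n k Y \<inter> meets n k Y'"
      using CV cr YY unfolding meets_def by auto
    hence c1: "card C \<le> card (meets n k Y \<inter> meets n k Y')"
      by (intro card_mono) (auto simp: finite_meets)
    have "W0 \<subseteq> meets n k X \<inter> meets n k X'"
      using WV cr' XX unfolding meets_def by auto
    hence c2: "card W0 \<le> card (meets n k X \<inter> meets n k X')"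
      by (intro card_mono) (auto simp: finite_meets)
    have m1: "card (meets n k Y \<inter> meets n k Y') + 2 * ((n - k) choose k) = (n choose k) + ((n - 2*k) choose k)"
      using card_meets2[OF YV] cYY by simp
    have m2: "card (meets n k X \<inter> meets n k X') + 2 * ((n - k) choose k) = (n choose k) + ((n - 2*k) choose k)"
      using card_meets2[OF XV] cXX by simp
    show ?thesis using c1 c2 m1 m2 num by linarith
  qed
  show "card C + card W0 + ((n - k) choose k) \<le> (n choose k)"
  proof (cases "intersecting C")
    case True
    obtain X0 where "X0 \<in> C" using Cne by auto
    thus ?thesis using cross_bound_int[OF k1 CV WV disj _ cr True] by blast
  next
    case False
    show ?thesis
    proof (cases "intersecting W0")
      case True
      obtain Y0 where "Y0 \<in> W0" using Wne by auto
      have disj': "W0 \<inter> C = {}" using disj by auto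
      thus ?thesis using cross_bound_int[OF k1 WV CV disj' \<open>Y0 \<in> W0\<close> cr' True] by linarith
    next
      case False
      thus ?thesis using both \<open>\<not> intersecting C\<close> by fastforce
    qed
  qed
  show "\<not> intersecting C \<Longrightarrow> \<not> intersecting W0 \<Longrightarrow> card C + card W0 + ((n - k) choose k) < (n choose k)"
    using both by blast
qed

lemma cross_bound_two:
  fixes n k :: nat
  assumes k1: "1 \<le> k" and n3: "3*k \<le> n"
    and CV: "C \<subseteq> kneser_vertices n k" and WV: "W0 \<subseteq> kneser_vertices n k"
    and disj: "C \<inter> W0 = {}"
    and cr: "\<forall>X\<in>C. \<forall>Y\<in>W0. X \<inter> Y \<noteq> {}"
    and iw: "intersecting W0" and U: "U1 \<in> W0" "U2 \<in> W0" "U1 \<noteq> U2"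
  shows "card C + card W0 + 2 * ((n - k) choose k) \<le> (n choose k) + ((n - k - 1) choose k)"
proof -
  have UV: "U1 \<in> kneser_vertices n k" "U2 \<in> kneser_vertices n k" using U WV by auto
  have "C \<union> W0 \<subseteq> meets n k U1 \<inter> meets n k U2"
    using CV WV cr iw U unfolding meets_def intersecting_def by (auto simp: Int_commute)
  hence c1: "card C + card W0 \<le> card (meets n k U1 \<inter> meets n k U2)"
    using card_disj_union_le[OF disj] finite_meets by blast
  have m: "card (meets n k U1 \<inter> meets n k U2) + 2 * ((n - k) choose k) = (n choose k) + ((n - card (U1 \<union> U2)) choose k)"
    using card_meets2[OF UV] .
  have fU: "finite U1" "finite U2" "card U1 = k" "card U2 = k" using UV kv_finite_mem by blast+
  have "card (U1 \<union> U2) \<ge> k + 1"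
  proof -
    have "\<not> U2 \<subseteq> U1"
    proof
      assume "U2 \<subseteq> U1"
      hence "U2 = U1" using fU card_subset_eq by metis
      thus False using U by simp
    qed
    hence "U1 \<subset> U1 \<union> U2" by auto
    hence "card U1 < card (U1 \<union> U2)" using fU by (intro psubset_card_mono) auto
    thus ?thesis using fU by simp
  qed
  hence "(n - card (U1 \<union> U2)) choose k \<le> (n - k - 1) choose k"
    by (intro choose_mono_top) simp
  thus ?thesis using c1 m by linarith
qed


lemma kneser_sym: "kneser_adj x y \<Longrightarrow> kneser_adj y x"
  unfolding kneser_adj_def by (simp add: Int_commute)

lemmas kc_disjoint = components_disjoint[where E=kneser_adj, OF kneser_sym]
lemmas kc_closed = components_closed[where E=kneser_adj, OF kneser_sym]
lemmas kc_nonadj = components_nonadj[where E=kneser_adj, OF kneser_sym]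
lemmas kc_edge = components_edge[where E=kneser_adj, OF kneser_sym]
lemmas kc_of_mem = components_of_mem[where E=kneser_adj, OF kneser_sym]

lemma sum_card_swap:
  assumes "finite A" "finite B"
  shows "(\<Sum>a\<in>A. card {b\<in>B. P a b}) = (\<Sum>b\<in>B. card {a\<in>A. P a b})"
proof -
  have "(\<Sum>a\<in>A. card {b\<in>B. P a b}) = (\<Sum>a\<in>A. \<Sum>b\<in>B. if P a b then 1 else 0)"
    using assms by (simp add: sum.If_cases Int_def)
  also have "\<dots> = (\<Sum>b\<in>B. \<Sum>a\<in>A. if P a b then 1 else 0)" by (rule sum.swap)
  also have "\<dots> = (\<Sum>b\<in>B. card {a\<in>A. P a b})"
    using assms by (simp add: sum.If_cases Int_def)
  finally show ?thesis .
qed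

lemma rho_le:
  fixes n k :: nat
  assumes k1: "1 \<le> k" and n3: "3*k \<le> n" and WV: "W \<subseteq> kneser_vertices n k"
    and Z: "Z \<in> kneser_vertices n k"
  shows "card {C \<in> components W kneser_adj. \<exists>X\<in>C. X \<inter> Z = {}} \<le> (n - k - 1) choose (k - 1)"
proof -
  let ?R = "{C \<in> components W kneser_adj. \<exists>X\<in>C. X \<inter> Z = {}}"
  define f where "f C = (SOME X. X \<in> C \<and> X \<inter> Z = {})" for C
  have fC: "f C \<in> C \<and> f C \<inter> Z = {}" if "C \<in> ?R" for C
    using that unfolding f_def by (metis (mono_tags, lifting) mem_Collect_eq someI_ex)
  have inj: "inj_on f ?R"
  proof
    fix C1 C2 assume C1: "C1 \<in> ?R" and C2: "C2 \<in> ?R" and eq: "f C1 = f C2"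
    show "C1 = C2"
    proof (rule ccontr)
      assume "C1 \<noteq> C2"
      hence "C1 \<inter> C2 = {}" using kc_disjoint C1 C2 by blast
      thus False using fC[OF C1] fC[OF C2] eq by auto
    qed
  qed
  have ZU: "Z \<subseteq> {1..n}" "card Z = k" "finite Z" using Z kv_finite_mem by blast+
  define U where "U = {1..n} - Z"
  have cU: "card U = n - k" unfolding U_def using ZU by (simp add: card_Diff_subset)
  have FU: "f ` ?R \<subseteq> {A. A \<subseteq> U \<and> card A = k}"
  proof
    fix A assume "A \<in> f ` ?R"
    then obtain C where C: "C \<in> ?R" "A = f C" by blast
    have "A \<in> C" "A \<inter> Z = {}" using fC[OF C(1)] C(2) by auto
    moreover have "C \<subseteq> kneser_vertices n k" using C(1) components_sub WV by blast
    ultimately show "A \<in> {A. A \<subseteq> U \<and> card A = k}"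
      unfolding U_def kneser_vertices_def by auto
  qed
  have inter: "intersecting (f ` ?R)"
    unfolding intersecting_def
  proof (intro ballI)
    fix A B assume A: "A \<in> f ` ?R" and B: "B \<in> f ` ?R"
    then obtain C1 C2 where C: "C1 \<in> ?R" "A = f C1" "C2 \<in> ?R" "B = f C2" by blast
    show "A \<inter> B \<noteq> {}"
    proof (cases "C1 = C2")
      case True
      hence "A = B" using C by simp
      moreover have "card A = k" using A FU by blast
      hence "A \<noteq> {}" using k1 by auto
      ultimately show ?thesis by simp
    next
      case False
      have "\<not> kneser_adj A B"
        using kc_nonadj[of C1 W C2 A B] C fC False by auto
      thus ?thesis unfolding kneser_adj_def by simp
    qed
  qed
  have "card (f ` ?R) \<le> (card U - 1) choose (k - 1)"
  proof -
    have fU: "finite U" unfolding U_def by simp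
    have "2*k \<le> card U" using cU n3 by simp
    thus ?thesis by (rule EKR[OF fU FU inter k1])
  qed
  hence "card (f ` ?R) \<le> (n - k - 1) choose (k - 1)" using cU by simp
  thus ?thesis using card_image[OF inj] by simp
qed


lemma main_ineq:
  fixes n k :: nat and S :: "nat set set"
  assumes k1: "1 \<le> k" and n3: "3*k \<le> n"
    and num: "(n choose k) + 2 * ((n - 2*k) choose k) < 3 * ((n - k) choose k)"
    and e3: "3 \<le> (n - k - 1) choose (k - 1)"
    and vc: "vertex_cut (kneser_vertices n k) kneser_adj S"
  shows "num_components (kneser_vertices n k - S) kneser_adj * (n - k) \<le> k * card S"
    and "\<not> intersecting (kneser_vertices n k - S) \<Longrightarrow>
          num_components (kneser_vertices n k - S) kneser_adj * (n - k) < k * card S"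
    and "Z \<in> S \<Longrightarrow> card {C \<in> components (kneser_vertices n k - S) kneser_adj. \<exists>X\<in>C. X \<inter> Z = {}} < (n - k - 1) choose (k - 1)
          \<Longrightarrow> num_components (kneser_vertices n k - S) kneser_adj * (n - k) < k * card S"
proof -
  define V where "V = kneser_vertices n k"
  define W where "W = V - S"
  define comps where "comps = components W kneser_adj"
  define c where "c = card comps"
  define e where "e = (n - k - 1) choose (k - 1)"
  define d where "d = (n - k) choose k"
  define nb where "nb C = {Z \<in> V. \<exists>X\<in>C. X \<inter> Z = {}}" for C
  define B where "B C = nb C - C" for C
  define W0 where "W0 C = V - (C \<union> nb C)" for C
  define rho where "rho Z = card {C \<in> comps. \<exists>X\<in>C. X \<inter> Z = {}}" for Z
  have SV: "S \<subseteq> V" and c2: "2 \<le> c"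
    using vc unfolding vertex_cut_def V_def W_def comps_def c_def num_components_def by auto
  have fV: "finite V" unfolding V_def by (rule finite_kv)
  have WV: "W \<subseteq> V" unfolding W_def by auto
  have fW: "finite W" using fV WV finite_subset by blast
  have fS: "finite S" using fV SV finite_subset by blast
  have fcomps: "finite comps" unfolding comps_def using fW by (rule finite_components)
  have Csub: "C \<subseteq> W" if "C \<in> comps" for C using that components_sub unfolding comps_def by blast
  have Cne: "C \<noteq> {}" if "C \<in> comps" for C using that components_nonempty unfolding comps_def by blast
  have closed: "Y \<in> C" if "C \<in> comps" "X \<in> C" "Y \<in> W" "X \<inter> Y = {}" for C X Y
    using kc_closed[of C W X Y] that unfolding comps_def kneser_adj_def by blast
  have BS: "B C \<subseteq> S" if C: "C \<in> comps" for C
  proof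
    fix Z assume Z: "Z \<in> B C"
    then obtain X where X: "X \<in> C" "X \<inter> Z = {}" "Z \<in> V" "Z \<notin> C" unfolding B_def nb_def by auto
    have "Z \<notin> W" using closed[OF C X(1) _ X(2)] X(4) by blast
    thus "Z \<in> S" using X(3) unfolding W_def by blast
  qed
  have BS2: "{Z\<in>S. \<exists>X\<in>C. X \<inter> Z = {}} = B C" if C: "C \<in> comps" for C
  proof
    show "{Z\<in>S. \<exists>X\<in>C. X \<inter> Z = {}} \<subseteq> B C"
      using SV Csub[OF C] unfolding B_def nb_def W_def by auto
    show "B C \<subseteq> {Z\<in>S. \<exists>X\<in>C. X \<inter> Z = {}}"
      using BS[OF C] unfolding B_def nb_def by auto
  qed
  have WC: "W - C \<subseteq> W0 C" if C: "C \<in> comps" for C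
  proof
    fix Y assume Y: "Y \<in> W - C"
    have "Y \<notin> nb C"
    proof
      assume "Y \<in> nb C"
      then obtain X where "X \<in> C" "X \<inter> Y = {}" unfolding nb_def by auto
      thus False using closed[OF C] Y by blast
    qed
    thus "Y \<in> W0 C" using Y WV unfolding W0_def by auto
  qed
  have WCne: "W - C \<noteq> {}" if C: "C \<in> comps" for C
  proof -
    have "\<not> comps \<subseteq> {C}"
    proof
      assume "comps \<subseteq> {C}"
      hence "c \<le> 1" unfolding c_def using card_mono[of "{C}" comps] by simp
      thus False using c2 by simp
    qed
    then obtain C' where C': "C' \<in> comps" "C' \<noteq> C" by auto
    obtain x where x: "x \<in> C'" using Cne[OF C'(1)] by auto
    have "C' \<inter> C = {}" using kc_disjoint[of C' W C] C' C unfolding comps_def by blast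
    hence "x \<notin> C" using x by auto
    moreover have "x \<in> W" using x Csub[OF C'(1)] by auto
    ultimately show ?thesis by auto
  qed
  have cross: "\<forall>X\<in>C. \<forall>Y\<in>W0 C. X \<inter> Y \<noteq> {}" if C: "C \<in> comps" for C
    unfolding W0_def nb_def by auto
  have cardB: "card (B C) + card C + card (W0 C) = card V" if C: "C \<in> comps" for C
  proof -
    have CV: "C \<subseteq> V" using Csub[OF C] WV by auto
    have nbV: "nb C \<subseteq> V" unfolding nb_def by auto
    have u1: "V = (C \<union> B C) \<union> W0 C" using CV nbV unfolding B_def W0_def by auto
    have fin: "finite C" "finite (B C)" "finite (W0 C)"
    proof -
      show "finite C" using CV fV finite_subset by blast
      have "B C \<subseteq> V" using nbV unfolding B_def by auto
      thus "finite (B C)" using fV finite_subset by blast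
      show "finite (W0 C)" using fV unfolding W0_def by simp
    qed
    have "card (C \<union> B C) = card C + card (B C)"
      using fin by (intro card_Un_disjoint) (auto simp: B_def)
    moreover have "card ((C \<union> B C) \<union> W0 C) = card (C \<union> B C) + card (W0 C)"
      using fin by (intro card_Un_disjoint) (auto simp: B_def W0_def)
    ultimately show ?thesis using u1 by simp
  qed
  have W0V: "W0 C \<subseteq> V" for C unfolding W0_def by auto
  have CW0: "C \<inter> W0 C = {}" for C unfolding W0_def by auto
  have cardV: "card V = n choose k" unfolding V_def by (rule card_kv)
  have Bge: "d \<le> card (B C)" if C: "C \<in> comps" for C
  proof -
    have CV: "C \<subseteq> V" using Csub[OF C] WV by auto
    have "W0 C \<noteq> {}" using WC[OF C] WCne[OF C] by blast
    hence "card C + card (W0 C) + d \<le> card V"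
      using cross_bound(1)[OF k1 n3 CV[unfolded V_def] W0V[unfolded V_def] CW0 Cne[OF C] _ cross[OF C] num]
      unfolding d_def cardV by blast
    thus ?thesis using cardB[OF C] by simp
  qed
  have rho_le': "rho Z \<le> e" if "Z \<in> S" for Z
    using rho_le[OF k1 n3 WV[unfolded V_def], of Z] that SV unfolding rho_def comps_def e_def V_def by blast
  have sum_eq: "(\<Sum>Z\<in>S. rho Z) = (\<Sum>C\<in>comps. card (B C))"
  proof -
    have "(\<Sum>Z\<in>S. rho Z) = (\<Sum>C\<in>comps. card {Z\<in>S. \<exists>X\<in>C. X \<inter> Z = {}})"
      unfolding rho_def by (rule sum_card_swap[OF fS fcomps])
    also have "\<dots> = (\<Sum>C\<in>comps. card (B C))"
      by (rule sum.cong) (simp_all add: BS2)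
    finally show ?thesis .
  qed
  have le1: "(\<Sum>Z\<in>S. rho Z) \<le> e * card S"
    using sum_bounded_above[of S rho e] rho_le' by (simp add: mult.commute)
  have ge1: "c * d \<le> (\<Sum>C\<in>comps. card (B C))"
    using sum_bounded_below[of comps d "\<lambda>C. card (B C)"] Bge unfolding c_def by (simp add: mult.commute)
  have epos: "0 < e" using e3 unfolding e_def by linarith
  have id: "k * d = (n - k) * e"
    unfolding d_def e_def using times_binomial_minus1_eq[of k "n - k"] k1 by simp
  have rew1: "k * (c * d) = e * (c * (n - k))"
  proof -
    have "k * (c * d) = c * (k * d)" by (simp add: ac_simps)
    also have "\<dots> = c * ((n - k) * e)" using id by simp
    also have "\<dots> = e * (c * (n - k))" by (simp add: ac_simps)
    finally show ?thesis .
  qed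
  have rew2: "k * (e * card S) = e * (k * card S)" by (simp add: ac_simps)
  have key: "c * (n - k) < k * card S" if lt: "c * d < e * card S"
  proof -
    have "k * (c * d) < k * (e * card S)" using lt k1 by simp
    hence "e * (c * (n - k)) < e * (k * card S)" unfolding rew1 rew2 .
    thus ?thesis using epos by simp
  qed
  have key2: "c * (n - k) \<le> k * card S" if le: "c * d \<le> e * card S"
  proof -
    have "k * (c * d) \<le> k * (e * card S)" using le by simp
    hence "e * (c * (n - k)) \<le> e * (k * card S)" unfolding rew1 rew2 .
    thus ?thesis using epos by simp
  qed
  have strictB: "c * (n - k) < k * card S" if C0: "C0 \<in> comps" and gt: "d < card (B C0)" for C0
  proof -
    have "(\<Sum>C\<in>comps. d) < (\<Sum>C\<in>comps. card (B C))"
      using sum_strict_mono_ex1[OF fcomps, of "\<lambda>C. d" "\<lambda>C. card (B C)"] Bge C0 gt by blast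
    hence "c * d < e * card S" using sum_eq le1 unfolding c_def by simp
    thus ?thesis by (rule key)
  qed
  show "num_components (kneser_vertices n k - S) kneser_adj * (n - k) \<le> k * card S"
  proof -
    have "c * d \<le> e * card S" using ge1 sum_eq le1 by simp
    hence "c * (n - k) \<le> k * card S" by (rule key2)
    thus ?thesis unfolding c_def comps_def W_def V_def num_components_def .
  qed
  show "num_components (kneser_vertices n k - S) kneser_adj * (n - k) < k * card S"
    if Z: "Z \<in> S" and lt: "card {C \<in> components (kneser_vertices n k - S) kneser_adj. \<exists>X\<in>C. X \<inter> Z = {}} < (n - k - 1) choose (k - 1)"
  proof -
    have "rho Z < e" using lt unfolding rho_def comps_def W_def V_def e_def .
    hence "(\<Sum>Z\<in>S. rho Z) < (\<Sum>Z\<in>S. e)"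
      using sum_strict_mono_ex1[OF fS, of rho "\<lambda>_. e"] rho_le' Z by blast
    hence "c * d < e * card S" using ge1 sum_eq by (simp add: mult.commute)
    hence "c * (n - k) < k * card S" by (rule key)
    thus ?thesis unfolding c_def comps_def W_def V_def num_components_def .
  qed
  show "num_components (kneser_vertices n k - S) kneser_adj * (n - k) < k * card S"
    if ni: "\<not> intersecting (kneser_vertices n k - S)"
  proof -
    obtain X X' where XX: "X \<in> W" "X' \<in> W" "X \<inter> X' = {}"
      using ni unfolding intersecting_def W_def V_def by auto
    define C0 where "C0 = comp_of W kneser_adj X"
    have C0: "C0 \<in> comps" unfolding C0_def comps_def components_alt using XX(1) by simp
    have XC0: "X \<in> C0" unfolding C0_def using comp_of_mem[OF XX(1)] .
    have X'C0: "X' \<in> C0" using closed[OF C0 XC0 XX(2) XX(3)] .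
    have nC0: "\<not> intersecting C0" using XC0 X'C0 XX(3) unfolding intersecting_def by blast
    have CV: "C0 \<subseteq> V" using Csub[OF C0] WV by auto
    have W0ne: "W0 C0 \<noteq> {}" using WC[OF C0] WCne[OF C0] by blast
    have goal_eq: "c * (n - k) < k * card S \<Longrightarrow> num_components (kneser_vertices n k - S) kneser_adj * (n - k) < k * card S"
      unfolding c_def comps_def W_def V_def num_components_def by simp
    show ?thesis
    proof (cases "intersecting (W0 C0)")
      case False
      have "card C0 + card (W0 C0) + d < card V"
        using cross_bound(2)[OF k1 n3 CV[unfolded V_def] W0V[unfolded V_def] CW0 Cne[OF C0] W0ne cross[OF C0] num nC0 False]
        unfolding d_def cardV by blast
      hence "d < card (B C0)" using cardB[OF C0] by simp
      thus ?thesis using strictB[OF C0] goal_eq by blast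
    next
      case True
      show ?thesis
      proof (cases "\<exists>U1\<in>W0 C0. \<exists>U2\<in>W0 C0. U1 \<noteq> U2")
        case True2: True
        then obtain U1 U2 where U: "U1 \<in> W0 C0" "U2 \<in> W0 C0" "U1 \<noteq> U2" by blast
        have A: "card C0 + card (W0 C0) + 2 * d \<le> (n choose k) + ((n - k - 1) choose k)"
          using cross_bound_two[OF k1 n3 CV[unfolded V_def] W0V[unfolded V_def] CW0 cross[OF C0] True U]
          unfolding d_def by blast
        have "n - k \<noteq> 0" using k1 n3 by simp
        then obtain m where m: "n - k = Suc m" using not0_implies_Suc by blast
        obtain j where j: "k = Suc j" using k1 by (cases k) auto
        have mj: "n - k = Suc m" "k = Suc j" using m j by auto
        have P: "d = ((n - k - 1) choose k) + e"
          unfolding d_def e_def using mj binomial_Suc_Suc[of m j] by simp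
        have "d < card (B C0)" using A P cardB[OF C0] cardV epos by linarith
        thus ?thesis using strictB[OF C0] goal_eq by blast
      next
        case False
        have fW0: "finite (W0 C0)" using fV W0V finite_subset by blast
        have "card (W0 C0) \<le> Suc 0" using False card_le_Suc0_iff_eq[OF fW0] by blast
        moreover have "card (W - C0) \<le> card (W0 C0)" using card_mono[OF fW0 WC[OF C0]] .
        ultimately have cw: "card (W - C0) \<le> 1" by simp
        define g where "g C = (SOME x. x \<in> C)" for C :: "nat set set"
        have gC: "g C \<in> C" if "C \<in> comps" for C
          using Cne[OF that] unfolding g_def by (metis ex_in_conv someI_ex)
        have ginj: "inj_on g (comps - {C0})"
        proof
          fix C1 C2 assume C1: "C1 \<in> comps - {C0}" and C2: "C2 \<in> comps - {C0}" and eq: "g C1 = g C2"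
          show "C1 = C2"
          proof (rule ccontr)
            assume "C1 \<noteq> C2"
            hence "C1 \<inter> C2 = {}" using kc_disjoint[of C1 W C2] C1 C2 unfolding comps_def by blast
            thus False using gC[of C1] gC[of C2] C1 C2 eq by auto
          qed
        qed
        have gim: "g ` (comps - {C0}) \<subseteq> W - C0"
        proof
          fix x assume "x \<in> g ` (comps - {C0})"
          then obtain C where C: "C \<in> comps" "C \<noteq> C0" "x = g C" by blast
          have "C \<inter> C0 = {}" using kc_disjoint[of C W C0] C C0 unfolding comps_def by blast
          thus "x \<in> W - C0" using gC[OF C(1)] Csub[OF C(1)] C(3) by auto
        qed
        have "card (comps - {C0}) \<le> card (W - C0)"
          using card_inj_on_le[OF ginj gim] fW by simp
        moreover have "c = card (comps - {C0}) + 1"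
          unfolding c_def using card_Suc_Diff1[OF fcomps C0] by simp
        ultimately have c2': "c \<le> 2" using cw by simp
        have "d \<le> card S"
          using Bge[OF C0] card_mono[OF fS BS[OF C0]] by simp
        hence "k * d \<le> k * card S" by simp
        hence "(n - k) * e \<le> k * card S" using id by simp
        moreover have "3 * (n - k) \<le> (n - k) * e" using e3 unfolding e_def by simp
        moreover have "c * (n - k) \<le> 2 * (n - k)" using c2' by simp
        moreover have "0 < n - k" using n3 k1 by simp
        ultimately have "c * (n - k) < k * card S" by linarith
        thus ?thesis using goal_eq by blast
      qed
    qed
  qed
qed


lemma deg_bound:
  fixes n k :: nat
  assumes k1: "1 \<le> k" and WV: "W \<subseteq> kneser_vertices n k" and y: "y \<in> {1..n}"
    and B: "B \<in> W" "y \<notin> B" and iw: "intersecting W"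
  shows "card {X \<in> W. y \<in> X} + ((n - k - 1) choose (k - 1)) \<le> ((n - 1) choose (k - 1))"
proof -
  let ?V = "kneser_vertices n k"
  have BV: "B \<subseteq> {1..n}" "card B = k" using B WV kv_finite_mem by blast+
  let ?S1 = "{X \<in> ?V. y \<in> X}"
  let ?S2 = "{X \<in> ?V. y \<in> X \<and> X \<inter> B = {}}"
  have c1: "card ?S1 = (n - 1) choose (k - 1)" using card_star[OF y k1] .
  have c2: "card ?S2 = (n - k - 1) choose (k - 1)"
    using card_contain_avoid[OF BV(1) y B(2) k1] BV(2) by simp
  have fS1: "finite ?S1" using finite_kv by simp
  have "{X \<in> W. y \<in> X} \<subseteq> ?S1 - ?S2"
    using WV B iw unfolding intersecting_def by (auto simp: Int_commute)
  hence "card {X \<in> W. y \<in> X} \<le> card (?S1 - ?S2)" using fS1 by (intro card_mono) auto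
  moreover have "card (?S1 - ?S2) = card ?S1 - card ?S2"
    by (rule card_Diff_subset) (auto intro: finite_subset[OF _ fS1])
  moreover have "card ?S2 \<le> card ?S1" by (rule card_mono[OF fS1]) auto
  ultimately have "card {X \<in> W. y \<in> X} + card ?S2 \<le> card ?S1" by linarith
  thus ?thesis using c1 c2 by simp
qed

lemma star_of_full:
  fixes n k :: nat
  assumes k1: "1 \<le> k" and n3: "3*k \<le> n"
    and hh: "(n - 1) choose (k - 1) < 2 * ((n - k - 1) choose (k - 1))"
    and WV: "W \<subseteq> kneser_vertices n k" and iw: "intersecting W" and W2: "2 \<le> card W"
    and full: "\<forall>Z \<in> kneser_vertices n k - W. (n - k - 1) choose (k - 1) \<le> card {X \<in> W. X \<inter> Z = {}}"
  shows "\<exists>x. \<forall>X\<in>W. x \<in> X"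
proof (rule ccontr)
  assume ns: "\<not> (\<exists>x. \<forall>X\<in>W. x \<in> X)"
  define e where "e = (n - k - 1) choose (k - 1)"
  have fW: "finite W" using WV finite_kv finite_subset by blast
  have Wne: "W \<noteq> {}" using W2 by auto
  have deg: "card {X \<in> W. y \<in> X} < e" if y: "y \<in> {1..n}" for y
  proof -
    obtain B where B: "B \<in> W" "y \<notin> B" using ns by blast
    have "card {X \<in> W. y \<in> X} + e \<le> (n - 1) choose (k - 1)"
      using deg_bound[OF k1 WV y B iw] unfolding e_def .
    thus ?thesis using hh unfolding e_def by linarith
  qed
  obtain A where A: "A \<in> W" using Wne by auto
  have AV: "A \<subseteq> {1..n}" "card A = k" "finite A" using A WV kv_finite_mem by blast+
  define j where "j = Min ((\<lambda>X. card (X \<inter> A)) ` W)"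
  have jle: "j \<le> card (X \<inter> A)" if "X \<in> W" for X
    unfolding j_def using fW that by simp
  obtain X0 where X0: "X0 \<in> W" "card (X0 \<inter> A) = j"
  proof -
    have "j \<in> (\<lambda>X. card (X \<inter> A)) ` W" unfolding j_def using fW Wne by (intro Min_in) auto
    thus ?thesis using that by blast
  qed
  have X0V: "X0 \<subseteq> {1..n}" "card X0 = k" "finite X0" using X0 WV kv_finite_mem by blast+
  have jk: "j \<le> k" using X0(2) AV card_mono[of A "X0 \<inter> A"] by auto
  have j1: "1 \<le> j"
  proof -
    have "X0 \<inter> A \<noteq> {}" using iw X0 A unfolding intersecting_def by blast
    hence "card (X0 \<inter> A) \<noteq> 0" using AV by simp
    thus ?thesis using X0 by simp
  qed
  show False
  proof (cases "j = k")
    case True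
    have "W \<subseteq> {A}"
    proof
      fix X assume X: "X \<in> W"
      have XV: "card X = k" "finite X" using X WV kv_finite_mem by blast+
      have "card (X \<inter> A) \<ge> k" using jle[OF X] True by simp
      hence "X \<inter> A = X" "X \<inter> A = A"
        using card_subset_eq[of X "X \<inter> A"] card_subset_eq[of A "X \<inter> A"] XV AV
        by (auto simp: card_mono order_antisym)
      thus "X \<in> {A}" by auto
    qed
    hence "card W \<le> 1" using card_mono[of "{A}" W] by simp
    thus False using W2 by simp
  next
    case False
    hence jk': "j < k" using jk by simp
    define Y where "Y = X0 \<inter> A"
    have cY: "card Y = j" unfolding Y_def using X0 by simp
    obtain y where y: "y \<in> Y" using j1 cY by (metis card.empty ex_in_conv not_one_le_zero)
    have fR: "finite ({1..n} - (A \<union> X0))" by simp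
    have "card ({1..n} - (A \<union> X0)) \<ge> n - 2 * k"
    proof -
      have "card (A \<union> X0) \<le> 2 * k" using card_Un_le[of A X0] AV X0V by simp
      moreover have "card ({1..n} - (A \<union> X0)) = n - card (A \<union> X0)"
        using AV X0V by (simp add: card_Diff_subset)
      ultimately show ?thesis by simp
    qed
    hence "j \<le> card ({1..n} - (A \<union> X0))" using jk' n3 by simp
    then obtain Q where Q: "Q \<subseteq> {1..n} - (A \<union> X0)" "card Q = j"
      using obtain_subset_with_card_n by metis
    define Z where "Z = (A - Y) \<union> Q"
    have fQ: "finite Q" using Q(1) finite_subset fR by blast
    have YA: "Y \<subseteq> A" "finite Y" unfolding Y_def using AV by auto
    have cAY: "card (A - Y) = k - j" using card_Diff_subset[OF YA(2) YA(1)] AV cY by simp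
    have "card Z = k"
    proof -
      have "(A - Y) \<inter> Q = {}" using Q(1) by auto
      hence "card Z = card (A - Y) + card Q" unfolding Z_def using AV fQ by (simp add: card_Un_disjoint)
      thus ?thesis using cAY Q(2) jk' by simp
    qed
    moreover have "Z \<subseteq> {1..n}" unfolding Z_def using AV Q(1) by auto
    ultimately have ZV: "Z \<in> kneser_vertices n k" unfolding kneser_vertices_def by simp
    have ZX0: "Z \<inter> X0 = {}" unfolding Z_def Y_def using Q(1) by auto
    have ZnW: "Z \<notin> W" using iw X0(1) ZX0 unfolding intersecting_def by blast
    have sub: "{X \<in> W. X \<inter> Z = {}} \<subseteq> {X \<in> W. y \<in> X}"
    proof
      fix X assume X: "X \<in> {X \<in> W. X \<inter> Z = {}}"
      hence XW: "X \<in> W" and XZ: "X \<inter> Z = {}" by auto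
      have "X \<inter> A \<subseteq> Y" using XZ unfolding Z_def by auto
      moreover have "card Y \<le> card (X \<inter> A)" using jle[OF XW] cY by simp
      moreover have "finite Y" unfolding Y_def using AV by simp
      ultimately have "X \<inter> A = Y" using card_seteq by blast
      thus "X \<in> {X \<in> W. y \<in> X}" using y XW by auto
    qed
    have yn: "y \<in> {1..n}" using y AV unfolding Y_def by auto
    have "card {X \<in> W. X \<inter> Z = {}} \<le> card {X \<in> W. y \<in> X}"
      using sub fW by (intro card_mono) auto
    also have "\<dots> < e" using deg[OF yn] .
    finally have "card {X \<in> W. X \<inter> Z = {}} < e" .
    moreover have "e \<le> card {X \<in> W. X \<inter> Z = {}}" using full ZV ZnW unfolding e_def by blast
    ultimately show False by simp
  qed
qed


lemma hyp_ln:
  fixes n k :: nat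
  assumes "real n > 2 / ln 2 * (real k)^2 + (2 - 3 / ln 2) * real k + 1 / ln 2"
  shows "(real n - 2 * real k) * ln 2 > (2 * real k - 1) * (real k - 1)"
proof -
  have l: "ln (2::real) > 0" by simp
  have "real n * ln 2 > (2 / ln 2 * (real k)^2 + (2 - 3 / ln 2) * real k + 1 / ln 2) * ln 2"
    using assms l by (simp add: mult_strict_right_mono)
  also have "(2 / ln 2 * (real k)^2 + (2 - 3 / ln 2) * real k + 1 / ln 2) * ln 2
      = 2 * (real k)^2 + 2 * real k * ln 2 - 3 * real k + 1"
    using l by (simp add: field_simps power2_eq_square)
  finally show ?thesis by (simp add: algebra_simps power2_eq_square)
qed

lemma n_big:
  fixes n k :: nat
  assumes "k \<ge> 3" "real n > 2 / ln 2 * (real k)^2 + (2 - 3 / ln 2) * real k + 1 / ln 2"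
  shows "real n > 2 * real k + (2 * real k - 1) * (real k - 1)"
proof -
  have h: "(real n - 2 * real k) * ln 2 > (2 * real k - 1) * (real k - 1)" using hyp_ln[OF assms(2)] .
  have l: "ln (2::real) \<le> 1" using ln_le_minus_one[of "2::real"] by simp
  have l0: "ln (2::real) > 0" by simp
  have k0: "(2 * real k - 1) * (real k - 1) \<ge> 0" using assms(1) by simp
  have pos: "real n - 2 * real k > 0"
  proof (rule ccontr)
    assume "\<not> real n - 2 * real k > 0"
    hence "(real n - 2 * real k) * ln 2 \<le> 0" using l0 by (simp add: mult_nonpos_nonneg)
    thus False using h k0 by simp
  qed
  hence "(real n - 2 * real k) * ln 2 \<le> (real n - 2 * real k)" using mult_left_le[OF l, of "real n - 2*real k"] by simp
  thus ?thesis using h by linarith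
qed

lemma first_conj:
  fixes k :: nat
  assumes "k \<ge> 3"
  shows "2 / ln 2 * (real k)^2 + (2 - 3 / ln 2) * real k + 1 / ln 2
           \<ge> (2 powr (1 / (real k - 1)) * (2 * real k) - 1) / (2 powr (1 / (real k - 1)) - 1)"
proof -
  define r where "r = (2::real) powr (1 / (real k - 1))"
  have k1: "real k - 1 > 0" using assms by simp
  have l: "ln (2::real) > 0" by simp
  have "r = exp (ln 2 / (real k - 1))" unfolding r_def powr_def by simp
  hence "r \<ge> 1 + ln 2 / (real k - 1)" using exp_ge_add_one_self by simp
  hence rl: "r - 1 \<ge> ln 2 / (real k - 1)" by simp
  have rpos: "r - 1 > 0" using rl l k1 by (smt (verit) divide_pos_pos)
  have "(r * (2 * real k) - 1) / (r - 1) = 2 * real k + (2 * real k - 1) / (r - 1)"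
    using rpos by (simp add: field_simps)
  also have "(2 * real k - 1) / (r - 1) \<le> (2 * real k - 1) / (ln 2 / (real k - 1))"
  proof (rule divide_left_mono[OF rl])
    show "0 \<le> 2 * real k - 1" using assms by simp
    have "0 < ln 2 / (real k - 1)" using l k1 by simp
    thus "0 < (r - 1) * (ln 2 / (real k - 1))" using mult_pos_pos[OF rpos] by blast
  qed
  also have "(2 * real k - 1) / (ln 2 / (real k - 1)) = (2 * real k - 1) * (real k - 1) / ln 2"
    by simp
  finally have "(r * (2 * real k) - 1) / (r - 1) \<le> 2 * real k + (2 * real k - 1) * (real k - 1) / ln 2"
    by simp
  also have "2 * real k + (2 * real k - 1) * (real k - 1) / ln 2
     = 2 / ln 2 * (real k)^2 + (2 - 3 / ln 2) * real k + 1 / ln 2"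
    using l by (simp add: field_simps power2_eq_square)
  finally show ?thesis unfolding r_def .
qed


lemma numerics:
  fixes n k :: nat
  assumes k3: "k \<ge> 3" and hyp: "real n > 2 / ln 2 * (real k)^2 + (2 - 3 / ln 2) * real k + 1 / ln 2"
  shows "3*k \<le> n"
    and "(n choose k) + 2 * ((n - 2*k) choose k) < 3 * ((n - k) choose k)"
    and "3 \<le> (n - k - 1) choose (k - 1)"
    and "(n - 1) choose (k - 1) < 2 * ((n - k - 1) choose (k - 1))"
proof -
  have h: "(real n - 2 * real k) * ln 2 > (2 * real k - 1) * (real k - 1)" using hyp_ln[OF hyp] .
  have nb: "real n > 2 * real k + (2 * real k - 1) * (real k - 1)" using n_big[OF k3 hyp] .
  have "(2 * real k - 1) * (real k - 1) - real k = 2 * real k * (real k - 2) + 1"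
    by (simp add: algebra_simps)
  moreover have "2 * real k * (real k - 2) \<ge> 0" using k3 by simp
  ultimately have "(2 * real k - 1) * (real k - 1) \<ge> real k" by linarith
  hence "real n > 3 * real k" using nb by linarith
  hence n3': "3 * k < n" by linarith
  thus n3: "3 * k \<le> n" by simp
  have D: "real n - 2 * real k > 0" using n3' by linarith
  have half: "n choose k < 2 * ((n - k) choose k)" using delta_half[OF k3 h D] .
  have ble: "real ((n - 2 * k) choose k) * real (n choose k) \<le> real ((n - k) choose k) ^ 2"
    using b_le[OF n3] .
  have dN: "(n - k) choose k < n choose k"
  proof -
    let ?X = "{1..k}"
    have XV: "?X \<in> kneser_vertices n k" unfolding kneser_vertices_def using n3 by auto
    have "?X \<in> meets n k ?X" unfolding meets_def using XV k3 by auto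
    hence "card (meets n k ?X) \<noteq> 0" using finite_meets[of n k ?X] by auto
    thus ?thesis using card_meets[OF XV] by linarith
  qed
  show "(n choose k) + 2 * ((n - 2*k) choose k) < 3 * ((n - k) choose k)"
  proof -
    define NN where "NN = real (n choose k)"
    define dd where "dd = real ((n - k) choose k)"
    define bb where "bb = real ((n - 2 * k) choose k)"
    have a1: "NN < 2 * dd" using half unfolding NN_def dd_def by linarith
    have a2: "dd < NN" using dN unfolding NN_def dd_def by linarith
    have a3: "bb * NN \<le> dd ^ 2" using ble unfolding NN_def dd_def bb_def .
    have a4: "NN > 0" using a2 unfolding dd_def by simp
    have "(NN - dd) * (2 * dd - NN) > 0" using a1 a2 by simp
    hence "3 * dd * NN - NN * NN - 2 * dd ^ 2 > 0" by (simp add: algebra_simps power2_eq_square)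
    hence "NN * (3 * dd - NN - 2 * bb) > 0" using a3 by (simp add: algebra_simps power2_eq_square)
    hence "3 * dd - NN - 2 * bb > 0" using a4 by (simp add: zero_less_mult_iff)
    hence "real (n choose k) + 2 * real ((n - 2 * k) choose k) < 3 * real ((n - k) choose k)"
      unfolding NN_def dd_def bb_def by linarith
    thus ?thesis by linarith
  qed
  have "(n - k - 1) choose 1 \<le> (n - k - 1) choose (k - 1)"
    by (rule binomial_mono) (use k3 n3 in auto)
  thus "3 \<le> (n - k - 1) choose (k - 1)" using k3 n3 by simp
  have id1: "k * ((n - k) choose k) = (n - k) * ((n - k - 1) choose (k - 1))"
    using times_binomial_minus1_eq[of k "n - k"] k3 by simp
  have id2: "k * (n choose k) = n * ((n - 1) choose (k - 1))"
    using times_binomial_minus1_eq[of k n] k3 by simp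
  have "k * (n choose k) < k * (2 * ((n - k) choose k))" using half k3 by simp
  hence "n * ((n - 1) choose (k - 1)) < 2 * ((n - k) * ((n - k - 1) choose (k - 1)))"
    using id1 id2 by (simp add: ac_simps)
  also have "\<dots> \<le> 2 * (n * ((n - k - 1) choose (k - 1)))" by simp
  finally have "n * ((n - 1) choose (k - 1)) < n * (2 * ((n - k - 1) choose (k - 1)))" by (simp add: ac_simps)
  thus "(n - 1) choose (k - 1) < 2 * ((n - k - 1) choose (k - 1))" by simp
qed


lemma intersecting_indep: "intersecting W \<Longrightarrow> \<forall>X\<in>W. \<forall>Y\<in>W. \<not> kneser_adj X Y"
  unfolding intersecting_def kneser_adj_def by blast

theorem corollary3p2:
  fixes n k :: nat
  assumes "k \<ge> 3"
    and "real n > 2 / ln 2 * (real k)^2 + (2 - 3 / ln 2) * real k + 1 / ln 2"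
  shows "2 / ln 2 * (real k)^2 + (2 - 3 / ln 2) * real k + 1 / ln 2
           \<ge> (2 powr (1 / (real k - 1)) * (2 * real k) - 1) / (2 powr (1 / (real k - 1)) - 1)
         \<and> toughness (kneser_vertices n k) kneser_adj = real n / real k - 1
         \<and> (\<forall>S. vertex_cut (kneser_vertices n k) kneser_adj S \<and>
           real (card S) / real (num_components (kneser_vertices n k - S) kneser_adj)
             = real n / real k - 1
         \<longrightarrow> (\<exists>I. max_independent_set (kneser_vertices n k) kneser_adj I
                  \<and> S = kneser_vertices n k - I))"
proof -
  have k3: "k \<ge> 3" using assms(1) .
  have k1: "1 \<le> k" using k3 by simp
  note nums = numerics[OF assms]
  have n3: "3 * k \<le> n" using nums(1) .
  have num: "(n choose k) + 2 * ((n - 2*k) choose k) < 3 * ((n - k) choose k)" using nums(2) .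
  have e3: "3 \<le> (n - k - 1) choose (k - 1)" using nums(3) .
  have hh: "(n - 1) choose (k - 1) < 2 * ((n - k - 1) choose (k - 1))" using nums(4) .
  define V where "V = kneser_vertices n k"
  define s1 where "s1 = (n - 1) choose (k - 1)"
  define e where "e = (n - k - 1) choose (k - 1)"
  have fV: "finite V" unfolding V_def by (rule finite_kv)
  have cardV: "card V = n choose k" unfolding V_def by (rule card_kv)
  have id2: "k * (n choose k) = n * s1"
    unfolding s1_def using times_binomial_minus1_eq[of k n] k1 by simp
  have npos: "n > 0" using n3 k1 by simp
  have kn: "k \<le> n" using n3 by simp
  have es1: "e \<le> s1" unfolding e_def s1_def by (rule choose_mono_top) simp
  have s12: "2 \<le> s1" using es1 e3 unfolding e_def by simp
  have rat: "real n / real k - 1 = real (n - k) / real k" using k1 kn by (simp add: field_simps of_nat_diff)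
  have lower: "real n / real k - 1 \<le> real (card S) / real (num_components (V - S) kneser_adj)"
    if vc: "vertex_cut V kneser_adj S" for S
  proof -
    define c where "c = num_components (V - S) kneser_adj"
    have c2: "2 \<le> c" using vc unfolding vertex_cut_def c_def by simp
    have "c * (n - k) \<le> k * card S"
      using main_ineq(1)[OF k1 n3 num e3 vc[unfolded V_def]] unfolding c_def V_def .
    hence "real c * real (n - k) \<le> real k * real (card S)" by (metis of_nat_le_iff of_nat_mult)
    hence "real (n - k) / real k \<le> real (card S) / real c"
      using c2 k1 by (simp add: field_simps)
    thus ?thesis using rat unfolding c_def by simp
  qed
  have ncomp_int: "num_components W kneser_adj = card W" if "intersecting W" for W
    unfolding num_components_def using card_components_indep[OF intersecting_indep[OF that]] .
  define I0 where "I0 = {Z \<in> V. 1 \<in> Z}"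
  have I0V: "I0 \<subseteq> V" unfolding I0_def by auto
  have cI0: "card I0 = s1" unfolding I0_def V_def s1_def using card_star[of 1 n k] npos k1 by simp
  have iI0: "intersecting I0" unfolding I0_def intersecting_def by blast
  define S0 where "S0 = V - I0"
  have VS0: "V - S0 = I0" unfolding S0_def using I0V by auto
  have vc0: "vertex_cut V kneser_adj S0"
    unfolding vertex_cut_def using VS0 ncomp_int[OF iI0] cI0 s12 unfolding S0_def by auto
  have cS0: "card S0 = (n choose k) - s1"
    unfolding S0_def using card_Diff_subset[of I0 V] I0V fV cI0 cardV finite_subset by metis
  have ratio0: "real (card S0) / real (num_components (V - S0) kneser_adj) = real n / real k - 1"
  proof -
    have "num_components (V - S0) kneser_adj = s1" using VS0 ncomp_int[OF iI0] cI0 by simp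
    moreover have "s1 \<le> n choose k" using cS0 I0V fV cI0 cardV card_mono by metis
    moreover have "real k * real (n choose k) = real n * real s1" using id2 by (metis of_nat_mult)
    ultimately show ?thesis using cS0 s12 k1 npos by (simp add: field_simps of_nat_diff)
  qed
  have tough: "toughness V kneser_adj = real n / real k - 1"
    unfolding toughness_def
  proof (rule cInf_eq_minimum)
    show "real n / real k - 1 \<in> {real (card S) / real (num_components (V - S) kneser_adj) |S. vertex_cut V kneser_adj S}"
      using vc0 ratio0 by force
    show "\<And>x. x \<in> {real (card S) / real (num_components (V - S) kneser_adj) |S. vertex_cut V kneser_adj S} \<Longrightarrow> real n / real k - 1 \<le> x"
      using lower by blast
  qed
  have eqcase: "\<exists>I. max_independent_set V kneser_adj I \<and> S = V - I"
    if vc: "vertex_cut V kneser_adj S" and req: "real (card S) / real (num_components (V - S) kneser_adj) = real n / real k - 1" for S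
  proof -
    define W where "W = V - S"
    define c where "c = num_components W kneser_adj"
    have SV: "S \<subseteq> V" and c2: "2 \<le> c" using vc unfolding vertex_cut_def c_def W_def by auto
    have "real (card S) / real c = real (n - k) / real k" using req rat unfolding c_def W_def by simp
    hence "real k * real (card S) = real c * real (n - k)" using c2 k1 by (simp add: field_simps)
    hence ceq: "c * (n - k) = k * card S" by (metis of_nat_eq_iff of_nat_mult)
    have iW: "intersecting W"
    proof (rule ccontr)
      assume "\<not> intersecting W"
      hence "c * (n - k) < k * card S"
        using main_ineq(2)[OF k1 n3 num e3 vc[unfolded V_def]] unfolding c_def W_def V_def by blast
      thus False using ceq by simp
    qed
    have cW: "c = card W" unfolding c_def using ncomp_int[OF iW] .
    have WV: "W \<subseteq> V" unfolding W_def by auto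
    have fW: "finite W" using fV WV finite_subset by blast
    have "card S + card W = card V"
    proof -
      have "V = S \<union> W" "S \<inter> W = {}" using SV unfolding W_def by auto
      thus ?thesis using fV SV WV finite_subset card_Un_disjoint by metis
    qed
    hence "k * card S + k * card W = k * (n choose k)" using cardV by (metis add_mult_distrib2)
    hence "card W * (n - k) + k * card W = n * s1" using ceq cW id2 by simp
    moreover have "card W * (n - k) + k * card W = n * card W" using kn by (simp add: algebra_simps)
    ultimately have "n * card W = n * s1" by simp
    hence cWs: "card W = s1" using npos by simp
    have full: "\<forall>Z \<in> kneser_vertices n k - W. (n - k - 1) choose (k - 1) \<le> card {X \<in> W. X \<inter> Z = {}}"
    proof
      fix Z assume Z: "Z \<in> kneser_vertices n k - W"
      hence ZS: "Z \<in> S" unfolding W_def V_def by auto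
      have comps: "components W kneser_adj = (\<lambda>x. {x}) ` W"
        using components_indep[OF intersecting_indep[OF iW]] .
      have "{C \<in> components W kneser_adj. \<exists>X\<in>C. X \<inter> Z = {}} = (\<lambda>x. {x}) ` {X \<in> W. X \<inter> Z = {}}"
        unfolding comps by auto
      hence rho: "card {C \<in> components W kneser_adj. \<exists>X\<in>C. X \<inter> Z = {}} = card {X \<in> W. X \<inter> Z = {}}"
        by (simp add: card_image inj_on_def)
      show "(n - k - 1) choose (k - 1) \<le> card {X \<in> W. X \<inter> Z = {}}"
      proof (rule ccontr)
        assume "\<not> ?thesis"
        hence "card {C \<in> components (kneser_vertices n k - S) kneser_adj. \<exists>X\<in>C. X \<inter> Z = {}} < (n - k - 1) choose (k - 1)"
          using rho unfolding W_def V_def by simp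
        hence "c * (n - k) < k * card S"
          using main_ineq(3)[OF k1 n3 num e3 vc[unfolded V_def] ZS] unfolding c_def W_def V_def by blast
        thus False using ceq by simp
      qed
    qed
    obtain x where x: "\<forall>X\<in>W. x \<in> X"
      using star_of_full[OF k1 n3 hh WV[unfolded V_def] iW _ full] cWs s12 by auto
    define I where "I = {Z \<in> V. x \<in> Z}"
    have WI: "W \<subseteq> I" unfolding I_def using x WV by auto
    obtain X1 where X1: "X1 \<in> W" using cWs s12 by (metis card.empty ex_in_conv not_numeral_le_zero)
    have xX1: "x \<in> X1" using x X1 by blast
    have "X1 \<in> kneser_vertices n k" using X1 WV unfolding V_def by blast
    hence "X1 \<subseteq> {1..n}" using kv_finite_mem by blast
    hence xn: "x \<in> {1..n}" using xX1 by blast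
    have cI: "card I = s1" unfolding I_def V_def s1_def using card_star[OF xn k1] .
    have fI: "finite I" unfolding I_def using fV by simp
    have WeqI: "W = I" using card_subset_eq[OF fI WI] cI cWs by simp
    have indI: "independent_set V kneser_adj I"
      unfolding independent_set_def kneser_adj_def I_def by auto
    have maxI: "max_independent_set V kneser_adj I"
      unfolding max_independent_set_def
    proof (intro conjI allI impI)
      show "independent_set V kneser_adj I" by (rule indI)
      fix J assume J: "independent_set V kneser_adj J"
      have JV: "J \<subseteq> {A. A \<subseteq> {1..n} \<and> card A = k}" using J unfolding independent_set_def V_def kneser_vertices_def by auto
      have iJ: "intersecting J" using J unfolding independent_set_def kneser_adj_def intersecting_def by blast
      have "card J \<le> (card {1..n} - 1) choose (k - 1)"
        by (rule EKR[OF _ JV iJ k1]) (use n3 in simp_all)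
      thus "card J \<le> card I" using cI unfolding s1_def by simp
    qed
    have "S = V - I" using WeqI SV unfolding W_def by auto
    thus ?thesis using maxI by blast
  qed
  show ?thesis
    using first_conj[OF k3] tough eqcase unfolding V_def by blast
qed


end
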